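(* Let $X$ be a complex Banach space with norm $\|\cdot\|$ and open unit ball $\mathbb{B}$, let $\mathbb{U}$ be the open unit disk in $\mathbb{C}$, and let $\beta\in\mathbb{R}$ with $|\beta|<\frac{\pi}{2}$. Let $g:\mathbb{U}\to\mathbb{C}$ be a biholomorphic function with $g(0)=1$ and $\operatorname{Re} g(z)>0$ for all $z\in\mathbb{U}$. Let $F:\mathbb{B}\to X$ be a holomorphic mapping of one-dimensional type (i.e. $F(x)=f(x)\,x$ for some holomorphic $f:\mathbb{B}\to\mathbb{C}$) such that $F(0)=0$, $DF(0)=I$, $DF(x)$ has a bounded inverse for every $x\in\mathbb{B}$, and $(DF(x))^{-1}F(x)\in\widehat{\mathcal{M}}_g(\beta)$ (the class defined in the context). Then for every $\lambda\in\mathbb{C}$ and every $x\in\mathbb{B}\setminus\{0\}$, \[ \left\|\frac{D^3F(0)(x^3)}{3!}-\lambda\,\frac12\, D^2F(0)\!\left(x,\frac{D^2F(0)(x^2)}{2!}\right)\right\|\le \frac{\|x\|^3}{2}\,\psi_\beta(\lambda)\,|g'(0)|, \] where \[ \psi_\beta(\lambda)=\cos\beta\cdot\max\left\{1,\ \left|(1-2\lambda)\cos\beta\, g'(0)+\frac{e^{i\beta}}{2}\cdot\frac{g''(0)}{g'(0)}\right|\right\}. \] Moreover, this estimate is sharp.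
   Context: $X^*$ denotes the dual space of $X$. For $x\in X\setminus\{0\}$, $T(x)=\{T_x\in X^*:\ \|T_x\|=1,\ T_x(x)=\|x\|\}$ (nonempty by Hahn–Banach). $D^nF(0)$ denotes the $n$-th Fréchet derivative of $F$ at $0$, a bounded symmetric $n$-linear map, and $D^nF(0)(x^n)=D^nF(0)[x,\dots,x]$. With $g$ as in the claim, put $g_\beta(z)=e^{-i\beta}\left(\cos\beta\, g(z)+i\sin\beta\right)$ for $z\in\mathbb{U}$. The class $\widehat{\mathcal{M}}_g(\beta)$ consists of all holomorphic mappings $h:\mathbb{B}\to X$ such that $\frac{\|x\|}{T_x(h(x))}\in g_\beta(\mathbb{U})$ for all $x\in\mathbb{B}\setminus\{0\}$ and all $T_x\in T(x)$. *)

theory Defs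
  imports "HOL-Analysis.Analysis"
begin

text \<open>A complex Banach space is modelled as a real Banach space type together with a
  complex scalar multiplication cs extending the real one and compatible with the norm.\<close>
definition complex_scaling :: "(complex \<Rightarrow> 'a::banach \<Rightarrow> 'a) \<Rightarrow> bool" where
  "complex_scaling cs \<longleftrightarrow>
     (\<forall>r x. cs (complex_of_real r) x = r *\<^sub>R x) \<and>
     (\<forall>a b x. cs (a + b) x = cs a x + cs b x) \<and>
     (\<forall>a x y. cs a (x + y) = cs a x + cs a y) \<and>
     (\<forall>a b x. cs (a * b) x = cs a (cs b x)) \<and>
     (\<forall>a x. norm (cs a x) = cmod a * norm x)"

definition holo_map ::
  "(complex \<Rightarrow> 'a::real_normed_vector \<Rightarrow> 'a) \<Rightarrow> (complex \<Rightarrow> 'b::real_normed_vector \<Rightarrow> 'b)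
    \<Rightarrow> 'a set \<Rightarrow> ('a \<Rightarrow> 'b) \<Rightarrow> bool" where
  "holo_map csA csB S F \<longleftrightarrow> open S \<and>
     (\<forall>x\<in>S. \<exists>D. (F has_derivative D) (at x) \<and> (\<forall>c v. D (csA c v) = csB c (D v)))"

definition support_functional ::
  "(complex \<Rightarrow> 'a::real_normed_vector \<Rightarrow> 'a) \<Rightarrow> 'a \<Rightarrow> ('a \<Rightarrow> complex) \<Rightarrow> bool" where
  "support_functional cs x T \<longleftrightarrow> bounded_linear T \<and> (\<forall>c y. T (cs c y) = c * T y) \<and>
     onorm T = 1 \<and> T x = complex_of_real (norm x)"

definition g_beta :: "(complex \<Rightarrow> complex) \<Rightarrow> real \<Rightarrow> complex \<Rightarrow> complex" where
  "g_beta g \<beta> z = exp (- \<i> * complex_of_real \<beta>) * (complex_of_real (cos \<beta>) * g z + \<i> * complex_of_real (sin \<beta>))"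

definition Mhat :: "(complex \<Rightarrow> 'a::real_normed_vector \<Rightarrow> 'a) \<Rightarrow> (complex \<Rightarrow> complex) \<Rightarrow> real
    \<Rightarrow> ('a \<Rightarrow> 'a) \<Rightarrow> bool" where
  "Mhat cs g \<beta> h \<longleftrightarrow> holo_map cs cs (ball 0 1) h \<and>
     (\<forall>x\<in>ball 0 1 - {0}. \<forall>T. support_functional cs x T \<longrightarrow>
        complex_of_real (norm x) / T (h x) \<in> g_beta g \<beta> ` ball 0 1)"

definition inv_apply :: "('a::real_normed_vector \<Rightarrow>\<^sub>L 'a) \<Rightarrow> 'a \<Rightarrow> 'a" where
  "inv_apply L y = (THE z. blinfun_apply L z = y)"

definition admissible ::
  "(complex \<Rightarrow> 'a::banach \<Rightarrow> 'a) \<Rightarrow> (complex \<Rightarrow> complex) \<Rightarrow> real \<Rightarrow> ('a \<Rightarrow> 'a)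
    \<Rightarrow> ('a \<Rightarrow> ('a \<Rightarrow>\<^sub>L 'a)) \<Rightarrow> ('a \<Rightarrow> ('a \<Rightarrow>\<^sub>L ('a \<Rightarrow>\<^sub>L 'a)))
    \<Rightarrow> ('a \<Rightarrow>\<^sub>L ('a \<Rightarrow>\<^sub>L ('a \<Rightarrow>\<^sub>L 'a))) \<Rightarrow> bool" where
  "admissible cs g \<beta> F DF D2F D3 \<longleftrightarrow>
     holo_map cs cs (ball 0 1) F \<and>
     (\<exists>f. holo_map cs (*) (ball 0 1) f \<and> (\<forall>x\<in>ball 0 1. F x = cs (f x) x)) \<and>
     F 0 = 0 \<and>
     (\<forall>x\<in>ball 0 1. (F has_derivative blinfun_apply (DF x)) (at x)) \<and>
     DF 0 = id_blinfun \<and>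
     (\<forall>x\<in>ball 0 1. \<exists>L. L o\<^sub>L DF x = id_blinfun \<and> DF x o\<^sub>L L = id_blinfun) \<and>
     Mhat cs g \<beta> (\<lambda>x. inv_apply (DF x) (F x)) \<and>
     (\<forall>x\<in>ball 0 1. (DF has_derivative blinfun_apply (D2F x)) (at x)) \<and>
     (D2F has_derivative blinfun_apply D3) (at 0)"

definition psi :: "real \<Rightarrow> (complex \<Rightarrow> complex) \<Rightarrow> complex \<Rightarrow> real" where
  "psi \<beta> g lam = cos \<beta> * max 1
     (cmod ((1 - 2 * lam) * complex_of_real (cos \<beta>) * deriv g 0
            + exp (\<i> * complex_of_real \<beta>) / 2 * (deriv (deriv g) 0 / deriv g 0)))"

definition lhs_expr ::
  "(complex \<Rightarrow> 'a::banach \<Rightarrow> 'a) \<Rightarrow> ('a \<Rightarrow> ('a \<Rightarrow>\<^sub>L ('a \<Rightarrow>\<^sub>L 'a)))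
    \<Rightarrow> ('a \<Rightarrow>\<^sub>L ('a \<Rightarrow>\<^sub>L ('a \<Rightarrow>\<^sub>L 'a))) \<Rightarrow> complex \<Rightarrow> 'a \<Rightarrow> 'a" where
  "lhs_expr cs D2F D3 lam x =
     (1 / fact 3) *\<^sub>R (D3 x x x) - cs (lam / 2) (D2F 0 x ((1 / fact 2) *\<^sub>R (D2F 0 x x)))"

end

theory Submission
  imports Defs "HOL-Complex_Analysis.Complex_Analysis"
begin

lemma cs_real: "complex_scaling cs \<Longrightarrow> cs (complex_of_real r) x = r *\<^sub>R x"
  by (simp add: complex_scaling_def)
lemma cs_add_left: "complex_scaling cs \<Longrightarrow> cs (a + b) x = cs a x + cs b x"
  by (simp add: complex_scaling_def)
lemma cs_add_right: "complex_scaling cs \<Longrightarrow> cs a (x + y) = cs a x + cs a y"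
  by (simp add: complex_scaling_def)
lemma cs_mult: "complex_scaling cs \<Longrightarrow> cs (a * b) x = cs a (cs b x)"
  by (simp add: complex_scaling_def)
lemma cs_norm: "complex_scaling cs \<Longrightarrow> norm (cs a x) = cmod a * norm x"
  by (simp add: complex_scaling_def)

lemma cs_zero_left: "complex_scaling cs \<Longrightarrow> cs 0 x = 0"
  using cs_real[of cs 0 x] by simp
lemma cs_one: "complex_scaling cs \<Longrightarrow> cs 1 x = x"
  using cs_real[of cs 1 x] by simp
lemma cs_zero_right: "complex_scaling cs \<Longrightarrow> cs a 0 = 0"
  using cs_norm[of cs a 0] by simp
lemma cs_scaleR_right: "complex_scaling cs \<Longrightarrow> cs a (r *\<^sub>R x) = r *\<^sub>R cs a x"
proof -
  assume c: "complex_scaling cs"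
  have "cs a (r *\<^sub>R x) = cs a (cs (of_real r) x)" using cs_real[OF c] by simp
  also have "\<dots> = cs (of_real r * a) x" using cs_mult[OF c] by (simp add: mult.commute)
  also have "\<dots> = r *\<^sub>R cs a x" using cs_mult[OF c] cs_real[OF c] by simp
  finally show ?thesis .
qed
lemma cs_scaleR_left: "complex_scaling cs \<Longrightarrow> cs (r *\<^sub>R a) x = r *\<^sub>R cs a x"
  using cs_mult[of cs "of_real r" a x] cs_real[of cs r] by (simp add: scaleR_conv_of_real)
lemma cs_comm: "complex_scaling cs \<Longrightarrow> cs a (cs b x) = cs b (cs a x)"
  using cs_mult[of cs a b x] cs_mult[of cs b a x] by (simp add: mult.commute)

lemma cs_bilinear: "complex_scaling cs \<Longrightarrow> bounded_bilinear cs"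
  apply (unfold_locales)
  apply (simp_all add: cs_add_left cs_add_right cs_scaleR_left cs_scaleR_right)
  apply (rule exI[of _ 1])
  apply (simp add: cs_norm)
  done

lemma cs_minus_right: "complex_scaling cs \<Longrightarrow> cs a (- x) = - cs a x"
  using bounded_bilinear.minus_right[OF cs_bilinear] by blast
lemma cs_minus_left: "complex_scaling cs \<Longrightarrow> cs (- a) x = - cs a x"
  using bounded_bilinear.minus_left[OF cs_bilinear] by blast
lemma cs_diff_right: "complex_scaling cs \<Longrightarrow> cs a (x - y) = cs a x - cs a y"
  using bounded_bilinear.diff_right[OF cs_bilinear] by blast
lemma cs_diff_left: "complex_scaling cs \<Longrightarrow> cs (a - b) x = cs a x - cs b x"
  using bounded_bilinear.diff_left[OF cs_bilinear] by blast

lemma cs_decomp: "complex_scaling cs \<Longrightarrow> cs a x = Re a *\<^sub>R x + Im a *\<^sub>R cs \<i> x"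
proof -
  assume c: "complex_scaling cs"
  have "a = complex_of_real (Re a) + complex_of_real (Im a) * \<i>" by (simp add: complex_eq_iff)
  then have "cs a x = cs (complex_of_real (Re a) + complex_of_real (Im a) * \<i>) x" by simp
  also have "\<dots> = Re a *\<^sub>R x + Im a *\<^sub>R cs \<i> x"
    by (simp add: cs_add_left[OF c] cs_mult[OF c] cs_real[OF c])
  finally show ?thesis .
qed

section \<open>Real Hahn-Banach via Zorn\<close>

definition hb_good :: "('a::real_normed_vector \<times> real) set \<Rightarrow> bool" where
  "hb_good G \<longleftrightarrow> (\<forall>x a y b. (x,a)\<in>G \<longrightarrow> (y,b)\<in>G \<longrightarrow> (x+y,a+b)\<in>G) \<and>
     (\<forall>r x a. (x,a)\<in>G \<longrightarrow> (r *\<^sub>R x, r*a)\<in>G) \<and> (\<forall>x a. (x,a)\<in>G \<longrightarrow> a \<le> norm x)"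

lemma hb_good_unique:
  assumes "hb_good G" "(x,a)\<in>G" "(x,b)\<in>G" shows "a = b"
proof -
  have "((-1) *\<^sub>R x, -b) \<in> G" using assms unfolding hb_good_def by (metis mult_minus1)
  then have "(x + (-1) *\<^sub>R x, a + -b) \<in> G" using assms unfolding hb_good_def by blast
  then have 1: "a - b \<le> 0" using assms(1) unfolding hb_good_def by fastforce
  have "((-1) *\<^sub>R x, -a) \<in> G" using assms unfolding hb_good_def by (metis mult_minus1)
  then have "(x + (-1) *\<^sub>R x, b + -a) \<in> G" using assms unfolding hb_good_def by blast
  then have 2: "b - a \<le> 0" using assms(1) unfolding hb_good_def by fastforce
  from 1 2 show ?thesis by simp
qed

lemma hb_extend:
  fixes M :: "('a::real_normed_vector \<times> real) set"
  assumes good: "hb_good M" and ne: "(0,0) \<in> M" and nz: "\<forall>c. (z,c) \<notin> M"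
  shows "\<exists>M'. hb_good M' \<and> M \<subseteq> M' \<and> M' \<noteq> M"
proof -
  have add: "\<And>x a y b. (x,a)\<in>M \<Longrightarrow> (y,b)\<in>M \<Longrightarrow> (x+y,a+b)\<in>M"
    and scl: "\<And>r x a. (x,a)\<in>M \<Longrightarrow> (r *\<^sub>R x, r*a)\<in>M"
    and bnd: "\<And>x a. (x,a)\<in>M \<Longrightarrow> a \<le> norm x" using good unfolding hb_good_def by blast+
  define S where "S = (\<lambda>p. snd p - norm (fst p - z)) ` M"
  have key: "a - norm (x - z) \<le> norm (y + z) - b" if "(x,a)\<in>M" "(y,b)\<in>M" for x a y b
  proof -
    have "a + b \<le> norm (x + y)" using bnd[OF add[OF that]] .
    also have "\<dots> \<le> norm (x - z) + norm (y + z)"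
      using norm_triangle_ineq[of "x - z" "y + z"] by simp
    finally show ?thesis by simp
  qed
  have Sne: "S \<noteq> {}" using ne unfolding S_def by blast
  have Sbdd: "bdd_above S" unfolding S_def bdd_above_def
    using key[OF _ ne] by force
  define c where "c = Sup S"
  have lo: "a - norm (x - z) \<le> c" if "(x,a)\<in>M" for x a
    unfolding c_def by (rule cSup_upper[OF _ Sbdd]) (use that S_def in force)
  have up: "c \<le> norm (y + z) - b" if "(y,b)\<in>M" for y b
    unfolding c_def by (rule cSup_least[OF Sne]) (use key that S_def in force)
  define M' where "M' = {(x + t *\<^sub>R z, a + t * c) | x a t. (x,a)\<in>M}"
  have "hb_good M'"
    unfolding hb_good_def
  proof (intro conjI allI impI)
    fix x a y b assume "(x,a)\<in>M'" "(y,b)\<in>M'"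
    then obtain x1 a1 t1 x2 a2 t2 where "(x1,a1)\<in>M" "(x2,a2)\<in>M"
      "x = x1 + t1 *\<^sub>R z" "a = a1 + t1*c" "y = x2 + t2 *\<^sub>R z" "b = a2 + t2 * c"
      unfolding M'_def by blast
    then have "(x1+x2, a1+a2) \<in> M" "x + y = (x1+x2) + (t1+t2) *\<^sub>R z"
      "a+b = (a1+a2) + (t1+t2)*c" by (auto simp: add algebra_simps)
    then show "(x+y,a+b)\<in>M'" unfolding M'_def by blast
  next
    fix r x a assume "(x,a)\<in>M'"
    then obtain x1 a1 t1 where "(x1,a1)\<in>M" "x = x1 + t1 *\<^sub>R z" "a = a1 + t1*c"
      unfolding M'_def by blast
    then have "(r *\<^sub>R x1, r*a1) \<in> M" "r *\<^sub>R x = r *\<^sub>R x1 + (r*t1) *\<^sub>R z"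
      "r*a = r*a1 + (r*t1)*c" using scl[of x1 a1 r] by (auto simp: algebra_simps)
    then show "(r *\<^sub>R x, r*a)\<in>M'" unfolding M'_def by blast
  next
    fix x a assume "(x,a)\<in>M'"
    then obtain x1 a1 t where m: "(x1,a1)\<in>M" and xe: "x = x1 + t *\<^sub>R z" and ae: "a = a1 + t*c"
      unfolding M'_def by blast
    consider "t = 0" | "t > 0" | "t < 0" by linarith
    then show "a \<le> norm x"
    proof cases
      case 1 then show ?thesis using bnd[OF m] xe ae by simp
    next
      case 2
      have eq: "x1 + t *\<^sub>R z = t *\<^sub>R ((1/t) *\<^sub>R x1 + z)" using 2 by (simp add: algebra_simps)
      have nq: "norm (x1 + t *\<^sub>R z) = t * norm ((1/t) *\<^sub>R x1 + z)"
        using 2 by (subst eq) simp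
      have "c \<le> norm ((1/t) *\<^sub>R x1 + z) - (1/t)*a1" using up[OF scl[OF m]] .
      then have "t * c \<le> t * (norm ((1/t) *\<^sub>R x1 + z) - (1/t)*a1)"
        using 2 by (simp add: mult_left_mono)
      then have "t * c \<le> norm (x1 + t *\<^sub>R z) - a1" using nq 2 by (simp add: right_diff_distrib)
      then show ?thesis using xe ae by (simp add: algebra_simps)
    next
      case 3
      define s where "s = -t"
      have s: "s > 0" using 3 s_def by simp
      have eq: "x1 + t *\<^sub>R z = s *\<^sub>R ((1/s) *\<^sub>R x1 - z)" using s s_def by (simp add: algebra_simps)
      have nq: "norm (x1 + t *\<^sub>R z) = s * norm ((1/s) *\<^sub>R x1 - z)"
        using s by (subst eq) simp
      have "(1/s)*a1 - norm ((1/s) *\<^sub>R x1 - z) \<le> c" using lo[OF scl[OF m]] .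
      then have "s * ((1/s)*a1 - norm ((1/s) *\<^sub>R x1 - z)) \<le> s * c"
        using s by (simp add: mult_left_mono)
      then have "a1 - norm (x1 + t *\<^sub>R z) \<le> s * c" using nq s by (simp add: right_diff_distrib)
      then show ?thesis using xe ae s_def by (simp add: algebra_simps)
    qed
  qed
  moreover have "M \<subseteq> M'" unfolding M'_def
    by (force intro: exI[of _ "0::real"])
  moreover have "(z, c) \<in> M'" unfolding M'_def mem_Collect_eq
  proof -
    have "(z, c) = (0 + 1 *\<^sub>R z, 0 + 1 * c)" by simp
    then show "\<exists>x a t. (z, c) = (x + t *\<^sub>R z, a + t * c) \<and> (x, a) \<in> M" using ne by blast
  qed
  then have "M' \<noteq> M" using nz by blast
  ultimately show ?thesis by blast
qed

lemma real_hahn_banach: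
  fixes G0 :: "('a::real_normed_vector \<times> real) set"
  assumes "hb_good G0" "(0,0) \<in> G0"
  shows "\<exists>F. linear F \<and> (\<forall>x. F x \<le> norm x) \<and> (\<forall>x a. (x,a)\<in>G0 \<longrightarrow> F x = a)"
proof -
  define A where "A = {G. G0 \<subseteq> G \<and> hb_good G}"
  have "\<forall>C\<in>chains A. \<exists>U\<in>A. \<forall>X\<in>C. X \<subseteq> U"
  proof
    fix C assume C: "C \<in> chains A"
    show "\<exists>U\<in>A. \<forall>X\<in>C. X \<subseteq> U"
    proof (cases "C = {}")
      case True then show ?thesis using assms unfolding A_def by blast
    next
      case False
      have CA: "C \<subseteq> A" and ch: "\<forall>X\<in>C. \<forall>Y\<in>C. X \<subseteq> Y \<or> Y \<subseteq> X"
        using C unfolding chains_def chain_subset_def by blast+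
      have "\<Union>C \<in> A" unfolding A_def hb_good_def
      proof (intro CollectI conjI allI impI)
        show "G0 \<subseteq> \<Union>C" using False CA unfolding A_def by blast
      next
        fix x a y b assume "(x,a)\<in>\<Union>C" "(y,b)\<in>\<Union>C"
        then obtain X Y where XY: "X\<in>C" "Y\<in>C" "(x,a)\<in>X" "(y,b)\<in>Y" by blast
        then have "X \<subseteq> Y \<or> Y \<subseteq> X" using ch by blast
        then show "(x+y,a+b)\<in>\<Union>C"
          using XY CA unfolding A_def hb_good_def by blast
      next
        fix r x a assume "(x,a)\<in>\<Union>C"
        then show "(r *\<^sub>R x, r*a)\<in>\<Union>C" using CA unfolding A_def hb_good_def by blast
      next
        fix x a assume "(x,a)\<in>\<Union>C"
        then show "a \<le> norm x" using CA unfolding A_def hb_good_def by blast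
      qed
      then show ?thesis by blast
    qed
  qed
  then obtain M where M: "M \<in> A" and mx: "\<forall>X\<in>A. M \<subseteq> X \<longrightarrow> X = M"
    using Zorn_Lemma2 by blast
  have gM: "hb_good M" and sub: "G0 \<subseteq> M" using M unfolding A_def by auto
  have tot: "\<exists>c. (z,c) \<in> M" for z
  proof (rule ccontr)
    assume nt: "\<not> (\<exists>c. (z,c) \<in> M)"
    have z0: "(0,0) \<in> M" using sub assms(2) by blast
    have nc: "\<forall>c. (z,c) \<notin> M" using nt by blast
    obtain M' where M'1: "hb_good M'" and M'2: "M \<subseteq> M'" and M'3: "M' \<noteq> M"
      using hb_extend[OF gM z0 nc] by (elim exE conjE)
    have "M' \<in> A" unfolding A_def using sub M'1 M'2 by blast
    then have "M' = M" using mx M'2 by blast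
    then show False using M'3 by simp
  qed
  define F where "F x = (SOME c. (x,c) \<in> M)" for x
  have FM: "(x, F x) \<in> M" for x unfolding F_def using tot by (metis someI_ex)
  have Fe: "F x = a" if "(x,a)\<in>M" for x a using hb_good_unique[OF gM FM that] .
  have "linear F"
  proof
    fix x y show "F (x + y) = F x + F y"
      using Fe gM FM unfolding hb_good_def by blast
  next
    fix r x show "F (r *\<^sub>R x) = r *\<^sub>R F x"
      using Fe gM FM unfolding hb_good_def by (simp)
  qed
  moreover have "F x \<le> norm x" for x using gM FM unfolding hb_good_def by blast
  moreover have "\<forall>x a. (x,a)\<in>G0 \<longrightarrow> F x = a" using Fe sub by blast
  ultimately show ?thesis by blast
qed


lemma complex_support_exists:
  fixes cs :: "complex \<Rightarrow> 'a::banach \<Rightarrow> 'a"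
  assumes c: "complex_scaling cs" and nu: "norm u = 1"
  shows "\<exists>T. bounded_linear T \<and> (\<forall>a y. T (cs a y) = a * T y) \<and> (\<forall>y. cmod (T y) \<le> norm y) \<and> T u = 1"
proof -
  define G0 where "G0 = {(cs z u, Re z) | z. True}"
  have "hb_good G0" unfolding hb_good_def G0_def
  proof (intro conjI allI impI)
    fix x a y b assume "(x, a) \<in> {(cs z u, Re z) |z. True}" "(y, b) \<in> {(cs z u, Re z) |z. True}"
    then obtain z1 z2 where "x = cs z1 u" "a = Re z1" "y = cs z2 u" "b = Re z2" by blast
    then have "(x + y, a + b) = (cs (z1+z2) u, Re (z1 + z2))" by (simp add: cs_add_left[OF c])
    then show "(x + y, a + b) \<in> {(cs z u, Re z) |z. True}" by blast
  next
    fix r x a assume "(x, a) \<in> {(cs z u, Re z) |z. True}"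
    then obtain z1 where "x = cs z1 u" "a = Re z1" by blast
    then have "(r *\<^sub>R x, r * a) = (cs (r *\<^sub>R z1) u, Re (r *\<^sub>R z1))" by (simp add: cs_scaleR_left[OF c])
    then show "(r *\<^sub>R x, r * a) \<in> {(cs z u, Re z) |z. True}" by blast
  next
    fix x a assume "(x, a) \<in> {(cs z u, Re z) |z. True}"
    then obtain z1 where "x = cs z1 u" "a = Re z1" by blast
    then show "a \<le> norm x" using complex_Re_le_cmod[of z1] by (simp add: cs_norm[OF c] nu)
  qed
  moreover have "(0,0) \<in> G0" unfolding G0_def
  proof -
    have "((0::'a), (0::real)) = (cs 0 u, Re 0)" by (simp add: cs_zero_left[OF c])
    then show "((0::'a), (0::real)) \<in> {(cs z u, Re z) |z. True}" by blast
  qed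
  ultimately obtain F where lF: "linear F" and Fb: "\<forall>x. F x \<le> norm x"
     and FG: "\<forall>x a. (x,a)\<in>G0 \<longrightarrow> F x = a"
    using real_hahn_banach by blast
  have Fu: "F (cs z u) = Re z" for z using FG unfolding G0_def by blast
  interpret F: linear F by fact
  define T where "T y = Complex (F y) (- F (cs \<i> y))" for y
  have ReT: "Re (T y) = F y" for y unfolding T_def by simp
  have ii: "cs \<i> (cs \<i> y) = - y" for y
    using cs_mult[OF c, of \<i> \<i> y] cs_minus_left[OF c, of 1 y] by (simp add: cs_one[OF c])
  have hom: "T (cs a y) = a * T y" for a y
  proof -
    have e1: "cs a y = Re a *\<^sub>R y + Im a *\<^sub>R cs \<i> y" by (rule cs_decomp[OF c])
    have e2: "cs \<i> (cs a y) = Re a *\<^sub>R cs \<i> y - Im a *\<^sub>R y"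
      using cs_decomp[OF c, of a "cs \<i> y"] cs_comm[OF c, of \<i> a y] ii by simp
    have f1: "F (cs a y) = Re a * F y + Im a * F (cs \<i> y)"
      unfolding e1 by (simp add: F.add F.scale)
    have f2: "F (cs \<i> (cs a y)) = Re a * F (cs \<i> y) - Im a * F y"
      unfolding e2 by (simp add: F.diff F.scale)
    show ?thesis unfolding T_def f1 f2
      by (simp add: complex_eq_iff algebra_simps)
  qed
  have nb: "cmod (T y) \<le> norm y" for y
  proof (cases "T y = 0")
    case True then show ?thesis by simp
  next
    case False
    define a where "a = cnj (T y) / cmod (T y)"
    have na: "cmod a = 1" unfolding a_def using False by (simp add: norm_divide)
    have "a * T y = of_real (cmod (T y))"
      unfolding a_def using False complex_norm_square[of "T y"]
      by (simp add: field_simps power2_eq_square mult.commute)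
    then have "cmod (T y) = Re (T (cs a y))" by (simp add: hom)
    also have "\<dots> = F (cs a y)" by (rule ReT)
    also have "\<dots> \<le> norm (cs a y)" using Fb by blast
    also have "\<dots> = norm y" by (simp add: cs_norm[OF c] na)
    finally show ?thesis .
  qed
  have "bounded_linear T"
  proof (rule bounded_linear_intro[where K=1])
    fix x y show "T (x + y) = T x + T y" unfolding T_def
      by (simp add: F.add cs_add_right[OF c] complex_eq_iff)
  next
    fix r x show "T (r *\<^sub>R x) = r *\<^sub>R T x" unfolding T_def
      by (simp add: F.scale cs_scaleR_right[OF c] complex_eq_iff)
  next
    fix x show "norm (T x) \<le> norm x * 1" using nb by simp
  qed
  moreover have "T u = 1"
    using Fu[of 1] Fu[of \<i>] unfolding T_def by (simp add: cs_one[OF c] complex_eq_iff)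
  ultimately show ?thesis using hom nb by blast
qed

lemma support_functional_rot:
  fixes cs :: "complex \<Rightarrow> 'a::banach \<Rightarrow> 'a"
  assumes c: "complex_scaling cs" and nu: "norm u = 1" and bl: "bounded_linear T"
    and hom: "\<forall>a y. T (cs a y) = a * T y" and nb: "\<forall>y. cmod (T y) \<le> norm y" and Tu: "T u = 1"
    and z: "z \<noteq> 0"
  shows "support_functional cs (cs z u) (\<lambda>y. (cnj z / cmod z) * T y)"
  unfolding support_functional_def
proof (intro conjI allI)
  show "bounded_linear (\<lambda>y. cnj z / complex_of_real (cmod z) * T y)"
    using bounded_linear_compose[OF bounded_linear_mult_right bl] unfolding o_def .
next
  fix a y show "cnj z / complex_of_real (cmod z) * T (cs a y) = a * (cnj z / complex_of_real (cmod z) * T y)"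
    using hom by simp
next
  have nz: "cmod (cnj z / complex_of_real (cmod z)) = 1" using z by (simp add: norm_divide)
  have val: "cnj z / complex_of_real (cmod z) * T (cs z u) = complex_of_real (cmod z)"
    using hom Tu z complex_norm_square[of z]
    by (simp add: field_simps power2_eq_square mult.commute)
  have "onorm (\<lambda>y. cnj z / complex_of_real (cmod z) * T y) \<le> 1"
  proof (rule onorm_bound)
    fix x show "norm (cnj z / complex_of_real (cmod z) * T x) \<le> 1 * norm x"
      unfolding norm_mult nz using nb by simp
  qed simp
  moreover have "norm (cnj z / complex_of_real (cmod z) * T (cs z u)) / norm (cs z u)
      \<le> onorm (\<lambda>y. cnj z / complex_of_real (cmod z) * T y)"
    by (rule le_onorm) (use bounded_linear_compose[OF bounded_linear_mult_right bl] in \<open>simp only: o_def\<close>)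
  moreover have "norm (cnj z / complex_of_real (cmod z) * T (cs z u)) / norm (cs z u) = 1"
    using val z by (simp add: cs_norm[OF c] nu)
  ultimately show "onorm (\<lambda>y. cnj z / complex_of_real (cmod z) * T y) = 1" by linarith
next
  show "cnj z / complex_of_real (cmod z) * T (cs z u) = complex_of_real (norm (cs z u))"
    using hom Tu z complex_norm_square[of z]
    by (simp add: field_simps power2_eq_square mult.commute cs_norm[OF c] nu)
qed


lemma hd: "f holomorphic_on S \<Longrightarrow> open S \<Longrightarrow> x \<in> S \<Longrightarrow> (f has_field_derivative deriv f x) (at x)"
  using holomorphic_derivI[of f S x UNIV] by simp

lemma hd2: "f holomorphic_on S \<Longrightarrow> open S \<Longrightarrow> x \<in> S \<Longrightarrow> (deriv f has_field_derivative deriv (deriv f) x) (at x)"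
  using hd[OF holomorphic_deriv] by blast

lemma deriv_eq_on_open:
  assumes "(g has_field_derivative D) (at a)" "open S" "a \<in> S" "\<And>x. x \<in> S \<Longrightarrow> g x = f x"
  shows "deriv f a = D"
  using has_field_derivative_transform_within_open[OF assms] DERIV_imp_deriv by blast

lemma schwarz_coeff:
  fixes w :: "complex \<Rightarrow> complex"
  assumes holw: "w holomorphic_on ball 0 1" and w0: "w 0 = 0"
    and wb: "\<And>z. z \<in> ball 0 1 \<Longrightarrow> w z \<in> ball 0 1"
  shows "cmod (deriv (deriv w) 0 / 2) \<le> 1 - (cmod (deriv w 0))\<^sup>2"
proof -
  have no: "\<And>z. norm z < 1 \<Longrightarrow> norm (w z) < 1" using wb by auto
  define a where "a = deriv w 0"
  define om where "om = (\<lambda>z. if z = 0 then deriv w 0 else (w z - w 0) / (z - 0))"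
  have holom: "om holomorphic_on ball 0 1" unfolding om_def
    by (rule pole_lemma[OF holw]) simp
  have wz: "w z = z * om z" for z unfolding om_def using w0 by auto
  have om0: "om 0 = a" unfolding om_def a_def by simp
  have ob: "cmod (om z) \<le> 1" if "z \<in> ball 0 1" for z
  proof (cases "z = 0")
    case True then show ?thesis using Schwarz_Lemma(2)[OF holw w0 no, of 0] om0 a_def by simp
  next
    case False
    have "cmod (w z) \<le> cmod z" using Schwarz_Lemma(1)[OF holw w0 no] that by simp
    then show ?thesis using False by (simp add: wz norm_mult)
  qed
  have dw: "deriv w z = om z + z * deriv om z" if "z \<in> ball 0 1" for z
  proof (rule deriv_eq_on_open[where g="\<lambda>z. z * om z" and S="ball 0 1"])
    show "((\<lambda>z. z * om z) has_field_derivative om z + z * deriv om z) (at z)"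
      using hd[OF holom open_ball that] by (auto intro!: derivative_eq_intros)
  qed (use that wz in auto)
  have ddw: "deriv (deriv w) 0 = 2 * deriv om 0"
  proof (rule deriv_eq_on_open[where g="\<lambda>z. om z + z * deriv om z" and S="ball 0 1"])
    show "((\<lambda>z. om z + z * deriv om z) has_field_derivative 2 * deriv om 0) (at 0)"
      using hd[OF holom open_ball, of 0] hd2[OF holom open_ball, of 0]
      by (auto intro!: derivative_eq_intros)
  qed (use dw in auto)
  show ?thesis
  proof (cases "cmod a = 1")
    case True
    then obtain \<alpha> where al: "\<forall>z. norm z < 1 \<longrightarrow> w z = \<alpha> * z"
      using Schwarz_Lemma(3)[OF holw w0 no, of 0] a_def by auto
    have "deriv w z = \<alpha>" if "z \<in> ball 0 1" for z
      by (rule deriv_eq_on_open[where g="\<lambda>z. \<alpha> * z" and S="ball 0 1"])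
         (use al that in \<open>auto intro!: derivative_eq_intros\<close>)
    then have "deriv (deriv w) 0 = 0"
      by (intro deriv_eq_on_open[where g="\<lambda>z. \<alpha>" and S="ball 0 1"]) auto
    then show ?thesis using True a_def by simp
  next
    case False
    then have a1: "cmod a < 1" using ob[of 0] om0 by simp
    have obs: "cmod (om z) < 1" if "z \<in> ball 0 1" for z
    proof (rule ccontr)
      assume "\<not> cmod (om z) < 1"
      then have e: "cmod (om z) = 1" using ob[OF that] by simp
      then have "z \<noteq> 0" using om0 a1 by auto
      moreover have "norm (w z) = norm z" using e by (simp add: wz norm_mult)
      moreover have "norm z < 1" using that by simp
      ultimately have ex: "\<exists>z. norm z < 1 \<and> z \<noteq> 0 \<and> norm (w z) = norm z" by blast
      obtain \<alpha> where al: "\<forall>z. norm z < 1 \<longrightarrow> w z = \<alpha> * z" and "norm \<alpha> = 1"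
        using Schwarz_Lemma(3)[OF holw w0 no, of 0] ex by auto
      have "deriv w 0 = \<alpha>"
        by (rule deriv_eq_on_open[where g="\<lambda>z. \<alpha> * z" and S="ball 0 1"])
           (use al in \<open>auto intro!: derivative_eq_intros\<close>)
      then show False using a1 \<open>norm \<alpha> = 1\<close> a_def by simp
    qed
    define v where "v = (\<lambda>z. Moebius_function 0 a (om z))"
    have dnz: "1 - cnj a * om z \<noteq> 0" if "z \<in> ball 0 1" for z
    proof
      assume "1 - cnj a * om z = 0"
      then have "cmod (cnj a * om z) = 1" by (metis norm_one right_minus_eq)
      moreover have "cmod a * cmod (om z) \<le> cmod a"
        using obs[OF that] by (simp add: mult_left_le)
      then have "cmod (cnj a * om z) < 1"
        using a1 by (simp add: norm_mult)
      ultimately show False by simp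
    qed
    have holv: "v holomorphic_on ball 0 1" unfolding v_def Moebius_function_simple
      by (intro holomorphic_intros holom) (use dnz in auto)
    have v0: "v 0 = 0" unfolding v_def om0 by (simp add: Moebius_function_eq_zero)
    have vno: "norm (v z) < 1" if "norm z < 1" for z
      unfolding v_def using Moebius_function_norm_lt_1[OF a1 obs] that by simp
    have na: "1 - cnj a * a \<noteq> 0" using dnz[of 0] om0 by simp
    have "(v has_field_derivative deriv om 0 / (1 - cnj a * a)) (at 0)"
    proof -
      have "((\<lambda>z. (om z - a) / (1 - cnj a * om z)) has_field_derivative
          (deriv om 0 * (1 - cnj a * om 0) - (om 0 - a) * (- cnj a * deriv om 0)) / (1 - cnj a * om 0)^2) (at 0)"
        using hd[OF holom open_ball, of 0] dnz[of 0]
        by (auto intro!: derivative_eq_intros simp: power2_eq_square)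
      moreover have "(deriv om 0 * (1 - cnj a * om 0) - (om 0 - a) * (- cnj a * deriv om 0)) / (1 - cnj a * om 0)^2
          = deriv om 0 / (1 - cnj a * a)"
        using na om0 by (simp add: power2_eq_square)
      ultimately show ?thesis unfolding v_def Moebius_function_simple by simp
    qed
    then have "deriv v 0 = deriv om 0 / (1 - cnj a * a)" by (rule DERIV_imp_deriv)
    moreover have "cmod (deriv v 0) \<le> 1" using Schwarz_Lemma(2)[OF holv v0 vno, of 0] by simp
    moreover have aa: "1 - cnj a * a = of_real (1 - (cmod a)^2)"
      using complex_norm_square[of a] by (simp add: mult.commute)
    moreover have "1 - (cmod a)^2 > 0" using a1 by (simp add: power_less_one_iff abs_square_less_1)
    ultimately have "cmod (deriv om 0) / (1 - (cmod a)^2) \<le> 1"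
      by (simp add: norm_divide del: of_real_diff of_real_power)
    then have "cmod (deriv om 0) \<le> 1 - (cmod a)^2"
      using \<open>1 - (cmod a)^2 > 0\<close> by (simp add: divide_le_eq)
    then show ?thesis using ddw a_def by simp
  qed
qed


lemma g_beta_alt: "g_beta g \<beta> z = exp (- \<i> * of_real \<beta>) * of_real (cos \<beta>) * g z + exp (- \<i> * of_real \<beta>) * \<i> * of_real (sin \<beta>)"
  unfolding g_beta_def by (simp add: algebra_simps)

lemma exp_i_beta: "exp (\<i> * of_real \<beta>) = of_real (cos \<beta>) + \<i> * of_real (sin \<beta>)"
  by (simp add: exp_Euler cos_of_real sin_of_real)

lemma g_beta_at1: "g z = 1 \<Longrightarrow> g_beta g \<beta> z = 1"
proof -
  assume g: "g z = 1"
  have "g_beta g \<beta> z = exp (- \<i> * of_real \<beta>) * exp (\<i> * of_real \<beta>)"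
    unfolding g_beta_def g exp_i_beta by simp
  also have "\<dots> = 1" by (simp add: exp_add[symmetric])
  finally show ?thesis .
qed

lemma coeff_relation:
  fixes k w g :: "complex \<Rightarrow> complex"
  assumes holk: "k holomorphic_on ball 0 1" and holw: "w holomorphic_on ball 0 1"
    and w0: "w 0 = 0" and wb: "\<And>z. z \<in> ball 0 1 \<Longrightarrow> w z \<in> ball 0 1"
    and holg: "g holomorphic_on ball 0 1" and g0: "g 0 = 1" and k0: "k 0 = 1"
    and rel: "\<And>z. z \<in> ball 0 1 \<Longrightarrow> k z + z * deriv k z = k z * g_beta g \<beta> (w z)"
  defines "cb \<equiv> exp (- \<i> * of_real \<beta>) * of_real (cos \<beta>)"
  shows "deriv k 0 = cb * deriv g 0 * deriv w 0"
    and "deriv (deriv k) 0 = (deriv k 0)^2 + cb * (deriv (deriv g) 0 * (deriv w 0)^2 + deriv g 0 * deriv (deriv w) 0) / 2"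
proof -
  define db where "db = exp (- \<i> * of_real \<beta>) * \<i> * of_real (sin \<beta>)"
  define Q where "Q z = cb * g (w z) + db" for z
  have Qe: "g_beta g \<beta> (w z) = Q z" for z unfolding Q_def g_beta_alt cb_def db_def by simp
  define D where "D z = cb * (deriv g (w z) * deriv w z)" for z
  have o: "open (ball (0::complex) 1)" by simp
  have z0: "(0::complex) \<in> ball 0 1" by simp
  have dQ: "(Q has_field_derivative D z) (at z)" if "z \<in> ball 0 1" for z
    unfolding Q_def D_def
    using DERIV_chain2[OF hd[OF holg o wb[OF that]] hd[OF holw o that]]
    by (auto intro!: derivative_eq_intros)
  have Q0: "Q 0 = 1" using g_beta_at1[of g 0 \<beta>] g0 w0 Qe[of 0] by simp
  have e1: "2 * deriv k z + z * deriv (deriv k) z = deriv k z * Q z + k z * D z" if "z \<in> ball 0 1" for z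
  proof -
    have "((\<lambda>z. k z + z * deriv k z) has_field_derivative 2 * deriv k z + z * deriv (deriv k) z) (at z)"
      using hd[OF holk o that] hd2[OF holk o that] by (auto intro!: derivative_eq_intros)
    then have "deriv (\<lambda>z. k z * Q z) z = 2 * deriv k z + z * deriv (deriv k) z"
      by (rule deriv_eq_on_open[OF _ o that]) (simp add: rel Qe)
    moreover have "deriv (\<lambda>z. k z * Q z) z = deriv k z * Q z + k z * D z"
      by (rule DERIV_imp_deriv) (use hd[OF holk o that] dQ[OF that] in \<open>auto intro!: derivative_eq_intros\<close>)
    ultimately show ?thesis by simp
  qed
  show 1: "deriv k 0 = cb * deriv g 0 * deriv w 0"
    using e1[OF z0] Q0 k0 w0 unfolding D_def by (simp add: algebra_simps)
  have holdg: "deriv g holomorphic_on ball 0 1" using holomorphic_deriv[OF holg o] .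
  have dD: "(D has_field_derivative cb * (deriv (deriv g) 0 * deriv w 0 * deriv w 0 + deriv g 0 * deriv (deriv w) 0)) (at 0)"
    unfolding D_def
    using DERIV_chain2[OF hd[OF holdg o wb[OF z0]] hd[OF holw o z0]] hd2[OF holw o z0] w0
    by (auto intro!: derivative_eq_intros)
  have "((\<lambda>z. 2 * deriv k z + z * deriv (deriv k) z) has_field_derivative 3 * deriv (deriv k) 0) (at 0)"
    using hd2[OF holk o z0] hd[OF holomorphic_deriv[OF holomorphic_deriv[OF holk o] o] o z0]
    by (auto intro!: derivative_eq_intros)
  then have "deriv (\<lambda>z. deriv k z * Q z + k z * D z) 0 = 3 * deriv (deriv k) 0"
    by (rule deriv_eq_on_open[OF _ o z0]) (simp add: e1)
  moreover have "deriv (\<lambda>z. deriv k z * Q z + k z * D z) 0 =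
      deriv (deriv k) 0 * Q 0 + deriv k 0 * D 0 + (deriv k 0 * D 0 + k 0 * (cb * (deriv (deriv g) 0 * deriv w 0 * deriv w 0 + deriv g 0 * deriv (deriv w) 0)))"
    by (rule DERIV_imp_deriv)
       (use hd2[OF holk o z0] dQ[OF z0] hd[OF holk o z0] dD in \<open>auto intro!: derivative_eq_intros\<close>)
  ultimately have "3 * deriv (deriv k) 0 = deriv (deriv k) 0 * Q 0 + deriv k 0 * D 0 + (deriv k 0 * D 0 + k 0 * (cb * (deriv (deriv g) 0 * deriv w 0 * deriv w 0 + deriv g 0 * deriv (deriv w) 0)))"
    by simp
  moreover have d: "D 0 = deriv k 0" using 1 w0 unfolding D_def by simp
  ultimately have "2 * deriv (deriv k) 0 = 2 * (deriv k 0)^2 + cb * (deriv (deriv g) 0 * (deriv w 0)^2 + deriv g 0 * deriv (deriv w) 0)"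
    using Q0 k0 by (simp add: algebra_simps power2_eq_square)
  then show "deriv (deriv k) 0 = (deriv k 0)^2 + cb * (deriv (deriv g) 0 * (deriv w 0)^2 + deriv g 0 * deriv (deriv w) 0) / 2"
    by (simp add: field_simps)
qed

lemma fs_value:
  fixes K1 K2 G1 G2 W1 W2 lam cb :: complex
  assumes "G1 \<noteq> 0" "K1 = cb * G1 * W1" "K2 = K1^2 + cb * (G2 * W1^2 + G1 * W2) / 2"
  shows "K2 / 2 - lam * K1^2 = (cb * G1 / 2) * (W2 / 2 + W1^2 * (G2 / (2 * G1) + (1 - 2 * lam) * cb * G1))"
  unfolding assms(3) assms(2) using assms(1) by (simp add: field_simps power2_eq_square)

lemma cos_pos_beta: "\<bar>\<beta>\<bar> < pi / 2 \<Longrightarrow> cos \<beta> > 0"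
  by (rule cos_gt_zero_pi) auto

lemma cmod_cb: "\<bar>\<beta>\<bar> < pi / 2 \<Longrightarrow> cmod (exp (- \<i> * of_real \<beta>) * of_real (cos \<beta>)) = cos \<beta>"
  using cos_pos_beta[of \<beta>] by (simp add: norm_mult)

lemma psi_M:
  fixes G1 G2 lam :: complex
  shows "cmod (G2 / (2 * G1) + (1 - 2 * lam) * (exp (- \<i> * of_real \<beta>) * of_real (cos \<beta>)) * G1)
     = cmod ((1 - 2 * lam) * of_real (cos \<beta>) * G1 + exp (\<i> * of_real \<beta>) / 2 * (G2 / G1))"
proof -
  have n1: "cmod (exp (\<i> * of_real \<beta>)) = 1" by simp
  have e: "exp (\<i> * of_real \<beta>) * exp (- \<i> * of_real \<beta>) = 1" by (simp add: exp_add[symmetric])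
  have "exp (\<i> * of_real \<beta>) * (G2 / (2 * G1) + (1 - 2 * lam) * (exp (- \<i> * of_real \<beta>) * of_real (cos \<beta>)) * G1)
     = (1 - 2 * lam) * of_real (cos \<beta>) * G1 + exp (\<i> * of_real \<beta>) / 2 * (G2 / G1)"
  proof -
    have "exp (\<i> * of_real \<beta>) * ((1 - 2 * lam) * (exp (- \<i> * of_real \<beta>) * of_real (cos \<beta>)) * G1)
        = (exp (\<i> * of_real \<beta>) * exp (- \<i> * of_real \<beta>)) * ((1 - 2 * lam) * of_real (cos \<beta>) * G1)"
      by (simp add: algebra_simps)
    then show ?thesis unfolding e by (simp add: distrib_left)
  qed
  then show ?thesis by (metis n1 norm_mult mult_1)
qed

lemma fs_bound:
  fixes G1 G2 W1 W2 lam :: complex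
  assumes b: "\<bar>\<beta>\<bar> < pi / 2" and G1: "G1 \<noteq> 0"
    and sw: "cmod (W2 / 2) \<le> 1 - (cmod W1)^2"
  defines "cb \<equiv> exp (- \<i> * of_real \<beta>) * of_real (cos \<beta>)"
  shows "cmod ((cb * G1 / 2) * (W2 / 2 + W1^2 * (G2 / (2 * G1) + (1 - 2 * lam) * cb * G1)))
     \<le> 1/2 * (cos \<beta> * max 1 (cmod ((1 - 2 * lam) * of_real (cos \<beta>) * G1 + exp (\<i> * of_real \<beta>) / 2 * (G2 / G1)))) * cmod G1"
proof -
  define M where "M = cmod (G2 / (2 * G1) + (1 - 2 * lam) * cb * G1)"
  have M: "M = cmod ((1 - 2 * lam) * of_real (cos \<beta>) * G1 + exp (\<i> * of_real \<beta>) / 2 * (G2 / G1))"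
    unfolding M_def cb_def using psi_M by simp
  define t where "t = (cmod W1)^2"
  have t0: "0 \<le> t" unfolding t_def by simp
  have t1: "t \<le> 1" using sw norm_ge_zero[of "W2/2"] unfolding t_def by linarith
  have "cmod (W2 / 2 + W1^2 * (G2 / (2 * G1) + (1 - 2 * lam) * cb * G1)) \<le> cmod (W2/2) + t * M"
    unfolding t_def M_def
    using norm_triangle_ineq[of "W2/2" "W1^2 * (G2 / (2 * G1) + (1 - 2 * lam) * cb * G1)"]
    by (simp add: norm_mult norm_power)
  also have "\<dots> \<le> (1 - t) + t * M" using sw t_def by simp
  also have "\<dots> \<le> max 1 M"
  proof -
    have "(1 - t) * 1 + t * M \<le> (1 - t) * max 1 M + t * max 1 M"
      using t0 t1 by (intro add_mono mult_left_mono) auto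
    then show ?thesis by (simp add: algebra_simps)
  qed
  finally have h: "cmod (W2 / 2 + W1^2 * (G2 / (2 * G1) + (1 - 2 * lam) * cb * G1)) \<le> max 1 M" .
  have cbn: "cmod (cb * G1 / 2) = cos \<beta> * cmod G1 / 2"
    unfolding cb_def using cmod_cb[OF b] by (simp add: norm_mult norm_divide)
  have "cmod ((cb * G1 / 2) * (W2 / 2 + W1^2 * (G2 / (2 * G1) + (1 - 2 * lam) * cb * G1)))
      = (cos \<beta> * cmod G1 / 2) * cmod (W2 / 2 + W1^2 * (G2 / (2 * G1) + (1 - 2 * lam) * cb * G1))"
    using cmod_cb[OF b] unfolding cb_def by (simp add: norm_mult)
  also have "\<dots> \<le> (cos \<beta> * cmod G1 / 2) * max 1 M"
    using h cos_pos_beta[OF b] by (intro mult_left_mono) auto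
  finally show ?thesis unfolding M by (simp add: algebra_simps)
qed

lemma fs_equal:
  fixes G1 G2 W1 W2 lam :: complex
  assumes b: "\<bar>\<beta>\<bar> < pi / 2" and G1: "G1 \<noteq> 0"
    and W: "(W1 = 1 \<and> W2 = 0 \<and> 1 \<le> cmod ((1 - 2 * lam) * of_real (cos \<beta>) * G1 + exp (\<i> * of_real \<beta>) / 2 * (G2 / G1)))
          \<or> (W1 = 0 \<and> W2 = 2 \<and> cmod ((1 - 2 * lam) * of_real (cos \<beta>) * G1 + exp (\<i> * of_real \<beta>) / 2 * (G2 / G1)) \<le> 1)"
  defines "cb \<equiv> exp (- \<i> * of_real \<beta>) * of_real (cos \<beta>)"
  shows "cmod ((cb * G1 / 2) * (W2 / 2 + W1^2 * (G2 / (2 * G1) + (1 - 2 * lam) * cb * G1)))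
     = 1/2 * (cos \<beta> * max 1 (cmod ((1 - 2 * lam) * of_real (cos \<beta>) * G1 + exp (\<i> * of_real \<beta>) / 2 * (G2 / G1)))) * cmod G1"
proof -
  define M where "M = cmod (G2 / (2 * G1) + (1 - 2 * lam) * cb * G1)"
  have M: "M = cmod ((1 - 2 * lam) * of_real (cos \<beta>) * G1 + exp (\<i> * of_real \<beta>) / 2 * (G2 / G1))"
    unfolding M_def cb_def using psi_M by simp
  have cbn: "cmod (cb * G1 / 2) = cos \<beta> * cmod G1 / 2"
    unfolding cb_def using cmod_cb[OF b] by (simp add: norm_mult norm_divide)
  from W show ?thesis
  proof
    assume a: "W1 = 1 \<and> W2 = 0 \<and> 1 \<le> cmod ((1 - 2 * lam) * of_real (cos \<beta>) * G1 + exp (\<i> * of_real \<beta>) / 2 * (G2 / G1))"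
    then have "max 1 M = M" using M by simp
    have cbn0: "cmod cb = cos \<beta>" unfolding cb_def using cmod_cb[OF b] .
    show ?thesis using a \<open>max 1 M = M\<close> unfolding M[symmetric] by (simp add: norm_mult cbn0 M_def)
  next
    assume a: "W1 = 0 \<and> W2 = 2 \<and> cmod ((1 - 2 * lam) * of_real (cos \<beta>) * G1 + exp (\<i> * of_real \<beta>) / 2 * (G2 / G1)) \<le> 1"
    then have "max 1 M = 1" using M by simp
    have cbn0: "cmod cb = cos \<beta>" unfolding cb_def using cmod_cb[OF b] .
    show ?thesis using a \<open>max 1 M = 1\<close> unfolding M[symmetric] by (simp add: norm_mult cbn0)
  qed
qed


lemma has_derivative_blinfun_apply_const:
  assumes "(A has_derivative A') (at x within S)"
  shows "((\<lambda>y. blinfun_apply (A y) v) has_derivative (\<lambda>h. blinfun_apply (A' h) v)) (at x within S)"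
  using bounded_bilinear.FDERIV[OF bounded_bilinear_blinfun_apply assms has_derivative_const[of v]]
  by simp

lemma line_deriv:
  fixes cs :: "complex \<Rightarrow> 'a::banach \<Rightarrow> 'a" and G :: "'b::real_normed_vector \<Rightarrow> 'a"
  assumes c: "complex_scaling cs"
    and dG: "(G has_derivative D) (at (s0 *\<^sub>R v))"
    and dpsi: "(\<psi> has_field_derivative \<psi>') (at (of_real s0))"
    and e: "e > 0"
    and eq: "\<And>s. \<bar>s - s0\<bar> < e \<Longrightarrow> G (s *\<^sub>R v) = cs (\<psi> (of_real s)) w"
  shows "D v = cs \<psi>' w"
proof -
  interpret lD: bounded_linear D using has_derivative_bounded_linear[OF dG] .
  have "((\<lambda>s. s *\<^sub>R v) has_derivative (\<lambda>h. h *\<^sub>R v)) (at s0)"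
    by (auto intro!: derivative_eq_intros)
  from has_derivative_compose[OF this dG]
  have "((\<lambda>s. G (s *\<^sub>R v)) has_derivative (\<lambda>h. D (h *\<^sub>R v))) (at s0)" by (simp add: o_def)
  then have r1: "((\<lambda>s. G (s *\<^sub>R v)) has_vector_derivative D v) (at s0)"
    unfolding has_vector_derivative_def by (simp add: lD.scaleR)
  have bl: "bounded_linear (\<lambda>a. cs a w)"
    using bounded_bilinear.bounded_linear_left[OF cs_bilinear[OF c]] .
  have "((\<lambda>s. \<psi> (of_real s)) has_vector_derivative \<psi>') (at s0)"
    using has_vector_derivative_real_field[OF dpsi] .
  then have "((\<lambda>s. cs (\<psi> (of_real s)) w) has_vector_derivative cs \<psi>' w) (at s0)"
    using bounded_linear.has_vector_derivative[OF bl] by blast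
  then have r2: "((\<lambda>s. G (s *\<^sub>R v)) has_vector_derivative cs \<psi>' w) (at s0)"
    by (rule has_vector_derivative_transform_within_open[where S="ball s0 e"])
       (use e eq in \<open>auto simp: dist_real_def abs_minus_commute\<close>)
  show ?thesis using vector_derivative_unique_at[OF r1 r2] .
qed


lemma DF_complex_linear:
  assumes holoF: "holo_map cs cs (ball 0 1) F"
    and dF: "(F has_derivative blinfun_apply L) (at y)" and y: "y \<in> ball 0 1"
  shows "blinfun_apply L (cs a v) = cs a (blinfun_apply L v)"
proof -
  obtain D where D: "(F has_derivative D) (at y)" "\<forall>c v. D (cs c v) = cs c (D v)"
    using holoF y unfolding holo_map_def by blast
  have "D = blinfun_apply L" using has_derivative_unique[OF D(1) dF] .
  then show ?thesis using D(2) by simp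
qed

lemma banach_core:
  fixes cs :: "complex \<Rightarrow> 'a::banach \<Rightarrow> 'a"
  assumes c: "complex_scaling cs"
    and Fe: "\<forall>x\<in>ball 0 1. F x = cs (f x) x"
    and holoF: "holo_map cs cs (ball 0 1) F"
    and dF: "\<forall>x\<in>ball 0 1. (F has_derivative blinfun_apply (DF x)) (at x)"
    and dDF: "\<forall>x\<in>ball 0 1. (DF has_derivative blinfun_apply (D2F x)) (at x)"
    and dD2F: "(D2F has_derivative blinfun_apply D3) (at 0)"
    and nu: "norm u = 1"
    and holk: "k holomorphic_on ball 0 1"
    and ke: "\<forall>z\<in>ball 0 1. f (cs z u) = k z"
    and r: "0 < r" "r < 1"
  shows "norm (lhs_expr cs D2F D3 lam (r *\<^sub>R u)) = r^3 * cmod (deriv (deriv k) 0 / 2 - lam * (deriv k 0)^2)"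
proof -
  have o: "open (ball (0::complex) 1)" by simp
  define P1 where "P1 z = k z + z * deriv k z" for z
  define P2 where "P2 z = 2 * deriv k z + z * deriv (deriv k) z" for z
  have holk3: "deriv (deriv k) holomorphic_on ball 0 1"
    by (intro holomorphic_deriv holk o)
  have dP0: "((\<lambda>z. z * k z) has_field_derivative P1 z) (at z)" if "z \<in> ball 0 1" for z
    unfolding P1_def using hd[OF holk o that] by (auto intro!: derivative_eq_intros)
  have dP1: "(P1 has_field_derivative P2 z) (at z)" if "z \<in> ball 0 1" for z
    unfolding P1_def P2_def using hd[OF holk o that] hd2[OF holk o that]
    by (auto intro!: derivative_eq_intros)
  have dP2: "(P2 has_field_derivative 3 * deriv (deriv k) 0) (at 0)"
    unfolding P2_def using hd2[OF holk o, of 0] hd[OF holk3 o, of 0]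
    by (auto intro!: derivative_eq_intros)
  have inb: "s *\<^sub>R u \<in> ball 0 1" "complex_of_real s \<in> ball 0 1" if "\<bar>s\<bar> < 1" for s
    using that nu by auto
  have su: "s *\<^sub>R u = cs (of_real s) u" for s using cs_real[OF c] by simp
  have clin: "blinfun_apply (DF y) (cs a v) = cs a (blinfun_apply (DF y) v)" if "y \<in> ball 0 1" for y a v
    using DF_complex_linear[OF holoF dF[rule_format, OF that] that] .
  have ee: "\<bar>s\<bar> < 1" if "\<bar>s - t\<bar> < 1 - \<bar>t\<bar>" for s t :: real using that by linarith
  have b: "blinfun_apply (DF (t *\<^sub>R u)) u = cs (P1 (of_real t)) u" if t: "\<bar>t\<bar> < 1" for t
  proof (rule line_deriv[OF c dF[rule_format, OF inb(1)[OF t]] dP0[OF inb(2)[OF t]]])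
    show "0 < 1 - \<bar>t\<bar>" using t by simp
  next
    fix s assume "\<bar>s - t\<bar> < 1 - \<bar>t\<bar>"
    then have s: "\<bar>s\<bar> < 1" by (rule ee)
    have "F (s *\<^sub>R u) = cs (f (cs (of_real s) u)) (cs (of_real s) u)"
      using Fe inb(1)[OF s] su by simp
    also have "\<dots> = cs (of_real s * k (of_real s)) u"
      using ke inb(2)[OF s] by (simp add: cs_mult[OF c] cs_comm[OF c])
    finally show "F (s *\<^sub>R u) = cs (of_real s * k (of_real s)) u" .
  qed
  have cc: "blinfun_apply (blinfun_apply (D2F (t *\<^sub>R u)) u) u = cs (P2 (of_real t)) u" if t: "\<bar>t\<bar> < 1" for t
  proof (rule line_deriv[OF c has_derivative_blinfun_apply_const[OF dDF[rule_format, OF inb(1)[OF t]]] dP1[OF inb(2)[OF t]]])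
    show "0 < 1 - \<bar>t\<bar>" using t by simp
  next
    fix s assume "\<bar>s - t\<bar> < 1 - \<bar>t\<bar>"
    then show "blinfun_apply (DF (s *\<^sub>R u)) u = cs (P1 (of_real s)) u" using b ee by blast
  qed
  have z0: "(0::complex) \<in> ball 0 1" by simp
  have dD2F': "(D2F has_derivative blinfun_apply D3) (at (0 *\<^sub>R u))" using dD2F by simp
  have d: "blinfun_apply (blinfun_apply (blinfun_apply D3 u) u) u = cs (3 * deriv (deriv k) 0) u"
  proof (rule line_deriv[OF c has_derivative_blinfun_apply_const[OF has_derivative_blinfun_apply_const[OF dD2F']]])
    show "(P2 has_field_derivative 3 * deriv (deriv k) 0) (at (of_real 0))" using dP2 by simp
  next
    fix s :: real assume "\<bar>s - 0\<bar> < 1"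
    then show "blinfun_apply (blinfun_apply (D2F (s *\<^sub>R u)) u) u = cs (P2 (of_real s)) u" using cc by simp
  qed simp
  have e: "blinfun_apply (blinfun_apply (D2F 0) u) (cs a u) = cs (a * P2 0) u" for a
  proof -
    have dDF0: "(DF has_derivative blinfun_apply (D2F (0 *\<^sub>R u))) (at (0 *\<^sub>R u))"
      using dDF by simp
    have "blinfun_apply (blinfun_apply (D2F (0 *\<^sub>R u)) u) (cs a u) = cs (a * P2 0) u"
    proof (rule line_deriv[OF c has_derivative_blinfun_apply_const[OF dDF0]])
      show "((\<lambda>z. a * P1 z) has_field_derivative a * P2 0) (at (of_real 0))"
        using dP1[OF z0] by (auto intro!: derivative_eq_intros)
    next
      fix s :: real assume "\<bar>s - 0\<bar> < 1"
      then have s: "\<bar>s\<bar> < 1" by simp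
      show "blinfun_apply (DF (s *\<^sub>R u)) (cs a u) = cs (a * P1 (of_real s)) u"
        using clin[OF inb(1)[OF s]] b[OF s] by (simp add: cs_mult[OF c])
    qed simp
    then show ?thesis by simp
  qed
  have P20: "P2 0 = 2 * deriv k 0" unfolding P2_def by simp
  define K1 where "K1 = deriv k 0"
  define K2 where "K2 = deriv (deriv k) 0"
  have l1: "blinfun_apply (blinfun_apply (blinfun_apply D3 (r *\<^sub>R u)) (r *\<^sub>R u)) (r *\<^sub>R u)
      = cs (of_real (r^3) * (3 * K2)) u"
    using d unfolding K2_def
    by (simp add: blinfun.scaleR_left blinfun.scaleR_right cs_mult[OF c] cs_real[OF c] power3_eq_cube)
  have l2: "blinfun_apply (blinfun_apply (D2F 0) (r *\<^sub>R u)) (r *\<^sub>R u) = cs (of_real (r^2) * (2 * K1)) u"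
    using e[of 1] P20 unfolding K1_def
    by (simp add: blinfun.scaleR_left blinfun.scaleR_right cs_mult[OF c] cs_real[OF c] cs_one[OF c] power2_eq_square)
  have l3: "blinfun_apply (blinfun_apply (D2F 0) (r *\<^sub>R u)) ((1 / fact 2) *\<^sub>R cs (of_real (r^2) * (2 * K1)) u)
      = cs (of_real (r^3) * (2 * K1 * K1)) u"
  proof -
    have "(1 / fact 2) *\<^sub>R cs (of_real (r^2) * (2 * K1)) u = cs (of_real (r^2) * K1) u"
      by (simp add: cs_scaleR_left[OF c, symmetric] scaleR_conv_of_real)
    moreover have A: "blinfun_apply (D2F 0) (r *\<^sub>R u) = r *\<^sub>R blinfun_apply (D2F 0) u"
      by (simp add: blinfun.scaleR_right)
    moreover have "blinfun_apply (r *\<^sub>R blinfun_apply (D2F 0) u) (cs (of_real (r^2) * K1) u)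
        = r *\<^sub>R cs (of_real (r^2) * K1 * P2 0) u"
      unfolding scaleR_blinfun.rep_eq e ..
    moreover have "r *\<^sub>R cs (of_real (r^2) * K1 * P2 0) u = cs (of_real (r^3) * (2 * K1 * K1)) u"
      unfolding cs_scaleR_left[OF c, symmetric] P20 K1_def
      by (simp add: scaleR_conv_of_real power2_eq_square power3_eq_cube algebra_simps)
    ultimately show ?thesis by simp
  qed
  have "lhs_expr cs D2F D3 lam (r *\<^sub>R u) = cs (of_real (r^3) * (K2 / 2 - lam * K1^2)) u"
    unfolding lhs_expr_def l1 l2 l3
    by (simp add: cs_scaleR_left[OF c, symmetric] cs_mult[OF c, symmetric] cs_diff_left[OF c, symmetric]
        scaleR_conv_of_real algebra_simps power2_eq_square fact_numeral)
  then show ?thesis using r by (simp add: cs_norm[OF c] nu norm_mult norm_power K1_def K2_def)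
qed


lemma g_beta_nonzero:
  assumes b: "\<bar>\<beta>\<bar> < pi / 2" and re: "Re (g z) > 0"
  shows "g_beta g \<beta> z \<noteq> 0"
proof -
  have "Re (complex_of_real (cos \<beta>) * g z + \<i> * complex_of_real (sin \<beta>)) = cos \<beta> * Re (g z)" by simp
  moreover have "cos \<beta> * Re (g z) > 0" using cos_pos_beta[OF b] re by simp
  ultimately have "complex_of_real (cos \<beta>) * g z + \<i> * complex_of_real (sin \<beta>) \<noteq> 0"
    by (metis less_irrefl zero_complex.sel(1))
  then show ?thesis unfolding g_beta_def by simp
qed

lemma k_holo:
  fixes cs :: "complex \<Rightarrow> 'a::banach \<Rightarrow> 'a"
  assumes c: "complex_scaling cs" and hf: "holo_map cs (*) (ball 0 1) f" and nu: "norm u = 1"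
  shows "(\<lambda>z. f (cs z u)) holomorphic_on ball 0 1"
proof -
  have "\<exists>f'. ((\<lambda>z. f (cs z u)) has_field_derivative f') (at z)" if z: "z \<in> ball 0 1" for z
  proof -
    have "cs z u \<in> ball 0 1" using z by (simp add: cs_norm[OF c] nu)
    then obtain D where D: "(f has_derivative D) (at (cs z u))" "\<forall>a v. D (cs a v) = a * D v"
      using hf unfolding holo_map_def by blast
    have bl: "bounded_linear (\<lambda>a. cs a u)"
      using bounded_bilinear.bounded_linear_left[OF cs_bilinear[OF c]] .
    have "((\<lambda>a. cs a u) has_derivative (\<lambda>a. cs a u)) (at z)"
      using bounded_linear.has_derivative[OF bl has_derivative_ident] by simp
    from has_derivative_compose[OF this D(1)]
    have "((\<lambda>a. f (cs a u)) has_derivative (\<lambda>h. h * D u)) (at z)"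
      using D(2) by (simp add: o_def)
    moreover have "(\<lambda>h. h * D u) = (*) (D u)" by (auto simp: mult.commute)
    ultimately show ?thesis unfolding has_field_derivative_def by auto
  qed
  then show ?thesis by (simp add: holomorphic_on_open)
qed

lemma mhat_step:
  fixes cs :: "complex \<Rightarrow> 'a::banach \<Rightarrow> 'a"
  assumes c: "complex_scaling cs" and b: "\<bar>\<beta>\<bar> < pi / 2"
    and reg: "\<forall>z\<in>ball 0 1. Re (g z) > 0"
    and Fe: "\<forall>x\<in>ball 0 1. F x = cs (f x) x"
    and holoF: "holo_map cs cs (ball 0 1) F"
    and dF: "\<forall>x\<in>ball 0 1. (F has_derivative blinfun_apply (DF x)) (at x)"
    and inv: "\<forall>x\<in>ball 0 1. \<exists>L. L o\<^sub>L DF x = id_blinfun \<and> DF x o\<^sub>L L = id_blinfun"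
    and Mh: "Mhat cs g \<beta> (\<lambda>x. inv_apply (DF x) (F x))"
    and nu: "norm u = 1"
    and holk: "k holomorphic_on ball 0 1"
    and ke: "\<forall>z\<in>ball 0 1. f (cs z u) = k z"
    and Tbl: "bounded_linear T" and Thom: "\<forall>a y. T (cs a y) = a * T y"
    and Tnb: "\<forall>y. cmod (T y) \<le> norm y" and Tu: "T u = 1"
    and z: "z \<in> ball 0 1" "z \<noteq> 0"
  shows "k z \<noteq> 0 \<and> (\<exists>\<zeta>\<in>ball 0 1. k z + z * deriv k z = k z * g_beta g \<beta> \<zeta>)"
proof -
  have o: "open (ball (0::complex) 1)" by simp
  define x' where "x' = cs z u"
  have nx: "norm x' = cmod z" unfolding x'_def by (simp add: cs_norm[OF c] nu)
  have xb: "x' \<in> ball 0 1" using nx z by simp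
  have xnz: "x' \<noteq> 0" using nx z by auto
  define A where "A = k z + z * deriv k z"
  have clin: "blinfun_apply (DF x') (cs a v) = cs a (blinfun_apply (DF x') v)" for a v
    using DF_complex_linear[OF holoF dF[rule_format, OF xb] xb] .
  have DFx: "blinfun_apply (DF x') x' = cs A x'"
  proof -
    have dk: "(k has_field_derivative deriv k z) (at (1 * z))" using hd[OF holk o z(1)] by simp
    have dz: "((\<lambda>\<zeta>. \<zeta> * z) has_field_derivative z) (at 1)"
      by (auto intro!: derivative_eq_intros)
    have dpsi: "((\<lambda>\<zeta>. \<zeta> * z * k (\<zeta> * z)) has_field_derivative (z * k z + z * (deriv k z * z))) (at (of_real 1))"
      using DERIV_chain2[OF dk dz] by (auto intro!: derivative_eq_intros)
    define e where "e = 1 / cmod z - 1"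
    have cz: "0 < cmod z" "cmod z < 1" using z by auto
    have e0: "e > 0" unfolding e_def using cz by (simp add: field_simps)
    have dG: "(F has_derivative blinfun_apply (DF x')) (at (1 *\<^sub>R x'))" using dF xb by simp
    have "blinfun_apply (DF x') x' = cs (z * k z + z * (deriv k z * z)) u"
    proof (rule line_deriv[OF c dG dpsi e0])
      fix s :: real assume s: "\<bar>s - 1\<bar> < e"
      then have "\<bar>s\<bar> < 1 / cmod z" unfolding e_def by linarith
      then have "\<bar>s\<bar> * cmod z < 1" using cz by (simp add: field_simps)
      then have sb: "complex_of_real s * z \<in> ball 0 1" by (simp add: norm_mult)
      have sx: "s *\<^sub>R x' = cs (complex_of_real s * z) u"
        unfolding x'_def by (simp add: cs_scaleR_right[OF c, symmetric] cs_real[OF c, symmetric] cs_mult[OF c])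
      have sxb: "s *\<^sub>R x' \<in> ball 0 1" using sb sx by (simp add: cs_norm[OF c] nu)
      have "F (s *\<^sub>R x') = cs (f (s *\<^sub>R x')) (s *\<^sub>R x')" using Fe sxb by blast
      also have "\<dots> = cs (k (complex_of_real s * z)) (cs (complex_of_real s * z) u)"
        using ke sb sx by simp
      also have "\<dots> = cs (complex_of_real s * z * k (complex_of_real s * z)) u"
        by (simp add: cs_mult[OF c, symmetric] mult.commute)
      finally show "F (s *\<^sub>R x') = cs (complex_of_real s * z * k (complex_of_real s * z)) u" .
    qed
    also have "\<dots> = cs A x'"
      unfolding A_def x'_def by (simp add: cs_mult[OF c, symmetric] algebra_simps)
    finally show ?thesis .
  qed
  obtain L where L: "L o\<^sub>L DF x' = id_blinfun" using inv xb by blast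
  have injD: "y = y'" if "blinfun_apply (DF x') y = blinfun_apply (DF x') y'" for y y'
  proof -
    have "blinfun_apply (L o\<^sub>L DF x') y = blinfun_apply (L o\<^sub>L DF x') y'" using that by simp
    then show ?thesis using L by simp
  qed
  have Anz: "A \<noteq> 0"
  proof
    assume "A = 0"
    then have "blinfun_apply (DF x') x' = blinfun_apply (DF x') 0"
      using DFx by (simp add: cs_zero_left[OF c])
    then show False using injD xnz by blast
  qed
  have Fx: "F x' = cs (k z) x'" using Fe xb ke z(1) unfolding x'_def by simp
  define y0 where "y0 = cs (k z / A) x'"
  have Dy0: "blinfun_apply (DF x') y0 = F x'"
    unfolding y0_def clin DFx Fx using Anz by (simp add: cs_mult[OF c, symmetric])
  have hx: "inv_apply (DF x') (F x') = y0"
    unfolding inv_apply_def using Dy0 injD by (intro the_equality) auto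
  define T' where "T' = (\<lambda>y. (cnj z / cmod z) * T y)"
  have sf: "support_functional cs x' T'"
    unfolding T'_def x'_def by (rule support_functional_rot[OF c nu Tbl Thom Tnb Tu z(2)])
  have T'x: "T' x' = of_real (norm x')" using sf unfolding support_functional_def by blast
  have T'h: "T' y0 = (k z / A) * of_real (norm x')"
    using sf T'x unfolding support_functional_def y0_def by simp
  have mem: "complex_of_real (norm x') / T' y0 \<in> g_beta g \<beta> ` ball 0 1"
    using Mh xb xnz sf hx unfolding Mhat_def by auto
  have nxnz: "norm x' \<noteq> 0" using xnz by simp
  have knz: "k z \<noteq> 0"
  proof
    assume "k z = 0"
    then have "0 \<in> g_beta g \<beta> ` ball 0 1" using mem T'h by simp
    then obtain \<zeta> where "\<zeta> \<in> ball 0 1" "g_beta g \<beta> \<zeta> = 0" by auto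
    then show False using g_beta_nonzero[OF b] reg by blast
  qed
  have "complex_of_real (norm x') / T' y0 = A / k z"
    unfolding T'h using nxnz knz Anz by (simp add: field_simps)
  then obtain \<zeta> where "\<zeta> \<in> ball 0 1" "A / k z = g_beta g \<beta> \<zeta>" using mem by auto
  then have "A = k z * g_beta g \<beta> \<zeta>" using knz by (simp add: field_simps)
  then show ?thesis using knz \<open>\<zeta> \<in> ball 0 1\<close> unfolding A_def by blast
qed


lemma k0_one:
  fixes cs :: "complex \<Rightarrow> 'a::banach \<Rightarrow> 'a"
  assumes c: "complex_scaling cs"
    and Fe: "\<forall>x\<in>ball 0 1. F x = cs (f x) x"
    and dF: "\<forall>x\<in>ball 0 1. (F has_derivative blinfun_apply (DF x)) (at x)"
    and DF0: "DF 0 = id_blinfun"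
    and nu: "norm u = 1"
    and holk: "k holomorphic_on ball 0 1"
    and ke: "\<forall>z\<in>ball 0 1. f (cs z u) = k z"
  shows "k 0 = 1"
proof -
  have o: "open (ball (0::complex) 1)" by simp
  have dG: "(F has_derivative blinfun_apply (DF (0 *\<^sub>R u))) (at (0 *\<^sub>R u))" using dF by simp
  have dpsi: "((\<lambda>z. z * k z) has_field_derivative k 0) (at (of_real 0))"
    using hd[OF holk o, of 0] by (auto intro!: derivative_eq_intros)
  have "blinfun_apply (DF (0 *\<^sub>R u)) u = cs (k 0) u"
  proof (rule line_deriv[OF c dG dpsi])
    fix s :: real assume "\<bar>s - 0\<bar> < 1"
    then have s: "\<bar>s\<bar> < 1" by simp
    have su: "s *\<^sub>R u = cs (of_real s) u" using cs_real[OF c] by simp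
    have b1: "s *\<^sub>R u \<in> ball 0 1" "complex_of_real s \<in> ball 0 1" using s nu by auto
    have "F (s *\<^sub>R u) = cs (f (cs (of_real s) u)) (cs (of_real s) u)" using Fe b1 su by simp
    also have "\<dots> = cs (of_real s * k (of_real s)) u"
      using ke b1 by (simp add: cs_mult[OF c] cs_comm[OF c])
    finally show "F (s *\<^sub>R u) = cs (of_real s * k (of_real s)) u" .
  qed simp
  then have "cs (k 0) u = cs 1 u" using DF0 by (simp add: cs_one[OF c])
  then have "cs (k 0 - 1) u = 0" by (simp add: cs_diff_left[OF c])
  then have "cmod (k 0 - 1) = 0" using cs_norm[OF c, of "k 0 - 1" u] nu by simp
  then show ?thesis by simp
qed

lemma part1:
  fixes cs :: "complex \<Rightarrow> 'a::banach \<Rightarrow> 'a" and g :: "complex \<Rightarrow> complex"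
  assumes c: "complex_scaling cs" and b: "\<bar>\<beta>\<bar> < pi / 2"
    and holg: "g holomorphic_on ball 0 1" and injg: "inj_on g (ball 0 1)"
    and g0: "g 0 = 1" and reg: "\<forall>z\<in>ball 0 1. Re (g z) > 0"
    and adm: "admissible cs g \<beta> F DF D2F D3"
    and x: "x \<in> ball (0::'a) 1 - {0}"
  shows "norm (lhs_expr cs D2F D3 lam x) \<le> norm x ^ 3 / 2 * psi \<beta> g lam * cmod (deriv g 0)"
proof -
  have o: "open (ball (0::complex) 1)" by simp
  have z0: "(0::complex) \<in> ball 0 1" by simp
  obtain f where holoF: "holo_map cs cs (ball 0 1) F" and hf: "holo_map cs (*) (ball 0 1) f"
    and Fe: "\<forall>x\<in>ball 0 1. F x = cs (f x) x"
    and dF: "\<forall>x\<in>ball 0 1. (F has_derivative blinfun_apply (DF x)) (at x)"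
    and DF0: "DF 0 = id_blinfun"
    and inv: "\<forall>x\<in>ball 0 1. \<exists>L. L o\<^sub>L DF x = id_blinfun \<and> DF x o\<^sub>L L = id_blinfun"
    and Mh: "Mhat cs g \<beta> (\<lambda>x. inv_apply (DF x) (F x))"
    and dDF: "\<forall>x\<in>ball 0 1. (DF has_derivative blinfun_apply (D2F x)) (at x)"
    and dD2F: "(D2F has_derivative blinfun_apply D3) (at 0)"
    using adm unfolding admissible_def by blast
  define r where "r = norm x"
  have r: "0 < r" "r < 1" using x unfolding r_def by auto
  define u where "u = (1 / r) *\<^sub>R x"
  have nu: "norm u = 1" unfolding u_def r_def using r r_def by simp
  have xu: "x = r *\<^sub>R u" unfolding u_def using r by simp
  define k where "k = (\<lambda>z. f (cs z u))"
  have holk: "k holomorphic_on ball 0 1" unfolding k_def by (rule k_holo[OF c hf nu])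
  have ke: "\<forall>z\<in>ball 0 1. f (cs z u) = k z" unfolding k_def by simp
  obtain T where Tbl: "bounded_linear T" and Thom: "\<forall>a y. T (cs a y) = a * T y"
    and Tnb: "\<forall>y. cmod (T y) \<le> norm y" and Tu: "T u = 1"
    using complex_support_exists[OF c nu] by blast
  have k0: "k 0 = 1" by (rule k0_one[OF c Fe dF DF0 nu holk ke])
  have ms: "k z \<noteq> 0 \<and> (\<exists>\<zeta>\<in>ball 0 1. k z + z * deriv k z = k z * g_beta g \<beta> \<zeta>)"
    if "z \<in> ball 0 1" "z \<noteq> 0" for z
    by (rule mhat_step[OF c b reg Fe holoF dF inv Mh nu holk ke Tbl Thom Tnb Tu that])
  have knz: "k z \<noteq> 0" if "z \<in> ball 0 1" for z
    using ms[OF that] k0 by (cases "z = 0") auto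
  obtain ginv where holginv: "ginv holomorphic_on g ` ball 0 1"
    and dginv: "\<And>z. z \<in> ball 0 1 \<Longrightarrow> deriv g z * deriv ginv (g z) = 1"
    and ginvg: "\<And>z. z \<in> ball 0 1 \<Longrightarrow> ginv (g z) = z"
    using holomorphic_has_inverse[OF holg o injg] by blast
  define cb where "cb = exp (- \<i> * of_real \<beta>) * of_real (cos \<beta>)"
  define db where "db = exp (- \<i> * of_real \<beta>) * \<i> * of_real (sin \<beta>)"
  have gb: "g_beta g \<beta> \<zeta> = cb * g \<zeta> + db" for \<zeta> unfolding cb_def db_def g_beta_alt by simp
  have cbnz: "cb \<noteq> 0" unfolding cb_def using cos_pos_beta[OF b] by simp
  define R where "R z = (k z + z * deriv k z) / k z" for z
  define P where "P z = (R z - db) / cb" for z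
  define w where "w z = ginv (P z)" for z
  have P0: "P 0 = g 0"
  proof -
    have "g_beta g \<beta> 0 = 1" using g_beta_at1[of g 0 \<beta>] g0 by simp
    then show "P 0 = g 0" unfolding P_def R_def using k0 cbnz gb[of 0] by (simp add: field_simps)
  qed
  have Pg: "\<exists>\<zeta>\<in>ball 0 1. P z = g \<zeta>" if z: "z \<in> ball 0 1" for z
  proof (cases "z = 0")
    case True
    then show ?thesis using P0 z0 by blast
  next
    case False
    then obtain \<zeta> where "\<zeta> \<in> ball 0 1" "k z + z * deriv k z = k z * g_beta g \<beta> \<zeta>" using ms z by blast
    then have "P z = g \<zeta>" unfolding P_def R_def using knz[OF z] cbnz gb[of \<zeta>] by (simp add: field_simps)
    then show ?thesis using \<open>\<zeta> \<in> ball 0 1\<close> by blast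
  qed
  have wb: "w z \<in> ball 0 1" and gw: "g (w z) = P z" if "z \<in> ball 0 1" for z
    using Pg[OF that] ginvg unfolding w_def by auto
  have holdk: "deriv k holomorphic_on ball 0 1" by (intro holomorphic_deriv holk o)
  have holP: "P holomorphic_on ball 0 1" unfolding P_def R_def
    by (intro holomorphic_intros holk holdk) (use knz cbnz in auto)
  have holw: "w holomorphic_on ball 0 1"
  proof -
    have "(ginv \<circ> P) holomorphic_on ball 0 1"
      by (rule holomorphic_on_compose_gen[OF holP holginv]) (use Pg in \<open>fastforce simp: image_iff\<close>)
    then show ?thesis unfolding w_def o_def by simp
  qed
  have w0: "w 0 = 0"
  proof -
    show ?thesis using P0 unfolding w_def using ginvg[OF z0] by simp
  qed
  have rel: "k z + z * deriv k z = k z * g_beta g \<beta> (w z)" if "z \<in> ball 0 1" for z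
  proof -
    have "g_beta g \<beta> (w z) = R z" unfolding gb gw[OF that] P_def using cbnz by simp
    then show ?thesis unfolding R_def using knz[OF that] by simp
  qed
  note cr = coeff_relation[OF holk holw w0 wb holg g0 k0 rel]
  have sw: "cmod (deriv (deriv w) 0 / 2) \<le> 1 - (cmod (deriv w 0))\<^sup>2"
    by (rule schwarz_coeff[OF holw w0 wb])
  have G1: "deriv g 0 \<noteq> 0" using dginv[OF z0] by auto
  have val: "deriv (deriv k) 0 / 2 - lam * (deriv k 0)^2
     = (cb * deriv g 0 / 2) * (deriv (deriv w) 0 / 2 + (deriv w 0)^2 * (deriv (deriv g) 0 / (2 * deriv g 0) + (1 - 2 * lam) * cb * deriv g 0))"
    by (rule fs_value[OF G1]) (use cr in \<open>simp_all add: cb_def\<close>)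
  have bnd: "cmod (deriv (deriv k) 0 / 2 - lam * (deriv k 0)^2) \<le> 1/2 * psi \<beta> g lam * cmod (deriv g 0)"
    unfolding val psi_def cb_def using fs_bound[OF b G1 sw] by simp
  have "norm (lhs_expr cs D2F D3 lam x) = r^3 * cmod (deriv (deriv k) 0 / 2 - lam * (deriv k 0)^2)"
    unfolding xu by (rule banach_core[OF c Fe holoF dF dDF dD2F nu holk ke r])
  also have "\<dots> \<le> r^3 * (1/2 * psi \<beta> g lam * cmod (deriv g 0))"
    using bnd r by (intro mult_left_mono) auto
  finally show ?thesis unfolding r_def by simp
qed


definition exJ :: "(complex \<Rightarrow> 'a::banach \<Rightarrow> 'a) \<Rightarrow> 'a \<Rightarrow>\<^sub>L 'a" where
  "exJ cs = Blinfun (cs \<i>)"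
definition exO :: "(complex \<Rightarrow> 'a::banach \<Rightarrow> 'a) \<Rightarrow> ('a \<Rightarrow> complex) \<Rightarrow> 'a \<Rightarrow>\<^sub>L ('a \<Rightarrow>\<^sub>L 'a)" where
  "exO cs T = Blinfun (\<lambda>y. Blinfun (\<lambda>v. cs (T v) y))"
definition exB1 :: "(complex \<Rightarrow> 'a::banach \<Rightarrow> 'a) \<Rightarrow> ('a \<Rightarrow> complex) \<Rightarrow> 'a \<Rightarrow>\<^sub>L ('a \<Rightarrow>\<^sub>L 'a)" where
  "exB1 cs T = Blinfun (\<lambda>h. Re (T h) *\<^sub>R id_blinfun + Im (T h) *\<^sub>R exJ cs + blinfun_apply (exO cs T) h)"
definition exCJ :: "(complex \<Rightarrow> 'a::banach \<Rightarrow> 'a) \<Rightarrow> ('a \<Rightarrow>\<^sub>L 'a) \<Rightarrow>\<^sub>L ('a \<Rightarrow>\<^sub>L 'a)" where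
  "exCJ cs = Blinfun (\<lambda>L. exJ cs o\<^sub>L L)"
definition exDF :: "(complex \<Rightarrow> 'a::banach \<Rightarrow> 'a) \<Rightarrow> ('a \<Rightarrow> complex) \<Rightarrow> (complex \<Rightarrow> complex) \<Rightarrow> 'a \<Rightarrow> 'a \<Rightarrow>\<^sub>L 'a" where
  "exDF cs T K x = Re (K (T x)) *\<^sub>R id_blinfun + Im (K (T x)) *\<^sub>R exJ cs
      + blinfun_apply (exO cs T) (cs (deriv K (T x)) x)"
definition exD2F :: "(complex \<Rightarrow> 'a::banach \<Rightarrow> 'a) \<Rightarrow> ('a \<Rightarrow> complex) \<Rightarrow> (complex \<Rightarrow> complex) \<Rightarrow> 'a \<Rightarrow> 'a \<Rightarrow>\<^sub>L ('a \<Rightarrow>\<^sub>L 'a)" where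
  "exD2F cs T K x = Re (deriv K (T x)) *\<^sub>R exB1 cs T + Im (deriv K (T x)) *\<^sub>R (exCJ cs o\<^sub>L exB1 cs T)
      + (exO cs T o\<^sub>L blinfun_apply (exO cs T) (cs (deriv (deriv K) (T x)) x))"

context
  fixes cs :: "complex \<Rightarrow> 'a::banach \<Rightarrow> 'a" and T :: "'a \<Rightarrow> complex"
  assumes c: "complex_scaling cs" and Tbl: "bounded_linear T"
    and Thom: "\<forall>a y. T (cs a y) = a * T y" and Tnb: "\<forall>y. cmod (T y) \<le> norm y"
begin

lemma blcs_right: "bounded_linear (cs a)"
  using bounded_bilinear.bounded_linear_right[OF cs_bilinear[OF c]] .
lemma blcs_left: "bounded_linear (\<lambda>a. cs a y)"
  using bounded_bilinear.bounded_linear_left[OF cs_bilinear[OF c]] .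

lemma app_exJ: "blinfun_apply (exJ cs) v = cs \<i> v"
  unfolding exJ_def using bounded_linear_Blinfun_apply[OF blcs_right] by simp

lemma bl_O_inner: "bounded_linear (\<lambda>v. cs (T v) y)"
  using bounded_linear_compose[OF blcs_left Tbl] .

lemma app_O_inner: "blinfun_apply (Blinfun (\<lambda>v. cs (T v) y)) = (\<lambda>v. cs (T v) y)"
  using bounded_linear_Blinfun_apply[OF bl_O_inner] .

lemma bl_O: "bounded_linear (\<lambda>y. Blinfun (\<lambda>v. cs (T v) y))"
proof (rule bounded_linear_intro[where K=1])
  fix x y show "Blinfun (\<lambda>v. cs (T v) (x + y)) = Blinfun (\<lambda>v. cs (T v) x) + Blinfun (\<lambda>v. cs (T v) y)"
    apply (rule blinfun_eqI) unfolding plus_blinfun.rep_eq app_O_inner by (simp add: cs_add_right[OF c])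
next
  fix r x show "Blinfun (\<lambda>v. cs (T v) (r *\<^sub>R x)) = r *\<^sub>R Blinfun (\<lambda>v. cs (T v) x)"
    apply (rule blinfun_eqI) unfolding scaleR_blinfun.rep_eq app_O_inner by (simp add: cs_scaleR_right[OF c])
next
  fix x show "norm (Blinfun (\<lambda>v. cs (T v) x)) \<le> norm x * 1"
  proof -
    have "norm (Blinfun (\<lambda>v. cs (T v) x)) \<le> norm x"
    proof (rule norm_blinfun_bound)
      fix v
      have "norm (cs (T v) x) = cmod (T v) * norm x" by (rule cs_norm[OF c])
      also have "\<dots> \<le> norm v * norm x" using Tnb by (intro mult_right_mono) auto
      finally show "norm (blinfun_apply (Blinfun (\<lambda>v. cs (T v) x)) v) \<le> norm x * norm v"
        by (simp add: app_O_inner mult.commute)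
    qed simp
    then show ?thesis by simp
  qed
qed

lemma app_exO: "blinfun_apply (blinfun_apply (exO cs T) y) v = cs (T v) y"
  unfolding exO_def bounded_linear_Blinfun_apply[OF bl_O] app_O_inner ..

lemma bl_B1: "bounded_linear (\<lambda>h. Re (T h) *\<^sub>R id_blinfun + Im (T h) *\<^sub>R exJ cs + blinfun_apply (exO cs T) h)"
proof -
  have a: "bounded_linear (\<lambda>h. Re (T h) *\<^sub>R (id_blinfun :: 'a \<Rightarrow>\<^sub>L 'a))"
    using bounded_linear_compose[OF bounded_linear_scaleR_left bounded_linear_compose[OF bounded_linear_Re Tbl]] .
  have b: "bounded_linear (\<lambda>h. Im (T h) *\<^sub>R exJ cs)"
    using bounded_linear_compose[OF bounded_linear_scaleR_left bounded_linear_compose[OF bounded_linear_Im Tbl]] .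
  show ?thesis using bounded_linear_add[OF bounded_linear_add[OF a b] blinfun.bounded_linear_right] .
qed

lemma app_exB1: "blinfun_apply (blinfun_apply (exB1 cs T) h) v = cs (T h) v + cs (T v) h"
  unfolding exB1_def bounded_linear_Blinfun_apply[OF bl_B1]
  by (simp add: plus_blinfun.rep_eq scaleR_blinfun.rep_eq app_exJ app_exO cs_decomp[OF c, of "T h" v])

lemma app_exCJ: "blinfun_apply (blinfun_apply (exCJ cs) L) v = cs \<i> (blinfun_apply L v)"
proof -
  have bl: "bounded_linear (\<lambda>L. exJ cs o\<^sub>L L)"
    using bounded_bilinear.bounded_linear_right[OF bounded_bilinear_blinfun_compose] .
  show ?thesis unfolding exCJ_def bounded_linear_Blinfun_apply[OF bl] by (simp add: app_exJ)
qed

lemma app_exDF: "blinfun_apply (exDF cs T K x) v = cs (K (T x)) v + cs (deriv K (T x) * T v) x"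
  unfolding exDF_def
  by (simp add: plus_blinfun.rep_eq scaleR_blinfun.rep_eq app_exJ app_exO cs_decomp[OF c, of "K (T x)" v]
      cs_mult[OF c] cs_comm[OF c])

lemma app_exD2F: "blinfun_apply (blinfun_apply (exD2F cs T K x) h) v
   = cs (deriv K (T x)) (cs (T h) v + cs (T v) h) + cs (T v) (cs (T h) (cs (deriv (deriv K) (T x)) x))"
  unfolding exD2F_def
  by (simp add: plus_blinfun.rep_eq scaleR_blinfun.rep_eq app_exCJ app_exB1 app_exO
      cs_decomp[OF c, of "deriv K (T x)" "cs (T h) v + cs (T v) h"])

end


lemma has_derivative_ex_blinfun:
  assumes a: "(f has_derivative D) F"
  shows "\<exists>L. (f has_derivative blinfun_apply L) F"
proof -
  have "blinfun_apply (Blinfun D) = D"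
    by (rule bounded_linear_Blinfun_apply[OF has_derivative_bounded_linear[OF a]])
  then show ?thesis using a by (intro exI[of _ "Blinfun D"]) simp
qed

context
  fixes cs :: "complex \<Rightarrow> 'a::banach \<Rightarrow> 'a" and T :: "'a \<Rightarrow> complex" and K :: "complex \<Rightarrow> complex"
  assumes c: "complex_scaling cs" and Tbl: "bounded_linear T"
    and Thom: "\<forall>a y. T (cs a y) = a * T y" and Tnb: "\<forall>y. cmod (T y) \<le> norm y"
    and holK: "K holomorphic_on ball 0 1"
begin

lemma Tin: "x \<in> ball 0 1 \<Longrightarrow> T x \<in> ball 0 1"
  using Tnb[rule_format, of x] by simp

lemma dT: "(T has_derivative T) (at x)"
  using bounded_linear.has_derivative[OF Tbl has_derivative_ident] by simp

lemma chainKT: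
  assumes "\<phi> holomorphic_on ball 0 1" "x \<in> ball 0 1"
  shows "((\<lambda>x. \<phi> (T x)) has_derivative (\<lambda>h. deriv \<phi> (T x) * T h)) (at x)"
proof -
  have "(\<phi> has_derivative (*) (deriv \<phi> (T x))) (at (T x))"
    using hd[OF assms(1) _ Tin[OF assms(2)]] unfolding has_field_derivative_def by simp
  from has_derivative_compose[OF dT this] show ?thesis by (simp add: o_def)
qed

lemma holdK: "deriv K holomorphic_on ball 0 1" by (intro holomorphic_deriv holK) simp
lemma holddK: "deriv (deriv K) holomorphic_on ball 0 1" by (intro holomorphic_deriv holdK) simp

lemma dcsK:
  assumes "\<phi> holomorphic_on ball 0 1" "x \<in> ball 0 1"
  shows "((\<lambda>x. cs (\<phi> (T x)) x) has_derivative (\<lambda>h. cs (\<phi> (T x)) h + cs (deriv \<phi> (T x) * T h) x)) (at x)"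
  using bounded_bilinear.FDERIV[OF cs_bilinear[OF c] chainKT[OF assms] has_derivative_ident] by simp

lemma ex_dF: "x \<in> ball 0 1 \<Longrightarrow> ((\<lambda>x. cs (K (T x)) x) has_derivative blinfun_apply (exDF cs T K x)) (at x)"
proof -
  assume x: "x \<in> ball 0 1"
  have "blinfun_apply (exDF cs T K x) = (\<lambda>h. cs (K (T x)) h + cs (deriv K (T x) * T h) x)"
    by (rule ext) (simp add: app_exDF[OF c Tbl Thom Tnb])
  then show ?thesis using dcsK[OF holK x] by simp
qed

lemma ex_dDF:
  assumes x: "x \<in> ball 0 1"
  shows "(exDF cs T K has_derivative blinfun_apply (exD2F cs T K x)) (at x)"
proof -
  have e: "exDF cs T K = (\<lambda>x. Re (K (T x)) *\<^sub>R id_blinfun + Im (K (T x)) *\<^sub>R exJ cs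
      + blinfun_apply (exO cs T) (cs (deriv K (T x)) x))"
    by (rule ext) (simp add: exDF_def)
  have d1: "((\<lambda>x. Re (K (T x)) *\<^sub>R (id_blinfun::'a\<Rightarrow>\<^sub>L'a)) has_derivative (\<lambda>h. Re (deriv K (T x) * T h) *\<^sub>R id_blinfun)) (at x)"
    using has_derivative_scaleR_left[OF has_derivative_Re[OF chainKT[OF holK x]]] .
  have d2: "((\<lambda>x. Im (K (T x)) *\<^sub>R exJ cs) has_derivative (\<lambda>h. Im (deriv K (T x) * T h) *\<^sub>R exJ cs)) (at x)"
    using has_derivative_scaleR_left[OF has_derivative_Im[OF chainKT[OF holK x]]] .
  have d3: "((\<lambda>x. blinfun_apply (exO cs T) (cs (deriv K (T x)) x)) has_derivative
      (\<lambda>h. blinfun_apply (exO cs T) (cs (deriv K (T x)) h + cs (deriv (deriv K) (T x) * T h) x))) (at x)"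
    using bounded_linear.has_derivative[OF blinfun.bounded_linear_right dcsK[OF holdK x]] .
  have D: "(exDF cs T K has_derivative (\<lambda>h. Re (deriv K (T x) * T h) *\<^sub>R id_blinfun + Im (deriv K (T x) * T h) *\<^sub>R exJ cs
      + blinfun_apply (exO cs T) (cs (deriv K (T x)) h + cs (deriv (deriv K) (T x) * T h) x))) (at x)"
    unfolding e by (intro has_derivative_add d1 d2 d3)
  have "(\<lambda>h. Re (deriv K (T x) * T h) *\<^sub>R id_blinfun + Im (deriv K (T x) * T h) *\<^sub>R exJ cs
      + blinfun_apply (exO cs T) (cs (deriv K (T x)) h + cs (deriv (deriv K) (T x) * T h) x)) = blinfun_apply (exD2F cs T K x)"
  proof (rule ext, rule blinfun_eqI)
    fix h v
    have "blinfun_apply (Re (deriv K (T x) * T h) *\<^sub>R id_blinfun + Im (deriv K (T x) * T h) *\<^sub>R exJ cs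
      + blinfun_apply (exO cs T) (cs (deriv K (T x)) h + cs (deriv (deriv K) (T x) * T h) x)) v
      = (Re (deriv K (T x) * T h) *\<^sub>R v + Im (deriv K (T x) * T h) *\<^sub>R cs \<i> v)
         + cs (T v) (cs (deriv K (T x)) h + cs (deriv (deriv K) (T x) * T h) x)"
      unfolding plus_blinfun.rep_eq scaleR_blinfun.rep_eq app_exJ[OF c Tbl Thom Tnb] app_exO[OF c Tbl Thom Tnb]
      by simp
    also have "\<dots> = cs (deriv K (T x) * T h) v + cs (T v) (cs (deriv K (T x)) h + cs (deriv (deriv K) (T x) * T h) x)"
      unfolding cs_decomp[OF c, of "deriv K (T x) * T h" v, symmetric] ..
    also have "\<dots> = blinfun_apply (blinfun_apply (exD2F cs T K x) h) v"
      unfolding app_exD2F[OF c Tbl Thom Tnb]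
      by (simp add: cs_add_right[OF c] cs_mult[OF c, symmetric] ac_simps)
    finally show "blinfun_apply (Re (deriv K (T x) * T h) *\<^sub>R id_blinfun + Im (deriv K (T x) * T h) *\<^sub>R exJ cs
      + blinfun_apply (exO cs T) (cs (deriv K (T x)) h + cs (deriv (deriv K) (T x) * T h) x)) v
      = blinfun_apply (blinfun_apply (exD2F cs T K x) h) v" .
  qed
  then show ?thesis using D by simp
qed

lemma ex_dD2F: "\<exists>D3. (exD2F cs T K has_derivative blinfun_apply D3) (at 0)"
proof -
  have x: "(0::'a) \<in> ball 0 1" by simp
  have e: "exD2F cs T K = (\<lambda>x. Re (deriv K (T x)) *\<^sub>R exB1 cs T + Im (deriv K (T x)) *\<^sub>R (exCJ cs o\<^sub>L exB1 cs T)
      + (exO cs T o\<^sub>L blinfun_apply (exO cs T) (cs (deriv (deriv K) (T x)) x)))"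
    by (rule ext) (simp add: exD2F_def)
  have d1: "((\<lambda>x. Re (deriv K (T x)) *\<^sub>R exB1 cs T) has_derivative (\<lambda>h. Re (deriv (deriv K) (T 0) * T h) *\<^sub>R exB1 cs T)) (at 0)"
    using has_derivative_scaleR_left[OF has_derivative_Re[OF chainKT[OF holdK x]]] .
  have d2: "((\<lambda>x. Im (deriv K (T x)) *\<^sub>R (exCJ cs o\<^sub>L exB1 cs T)) has_derivative (\<lambda>h. Im (deriv (deriv K) (T 0) * T h) *\<^sub>R (exCJ cs o\<^sub>L exB1 cs T))) (at 0)"
    using has_derivative_scaleR_left[OF has_derivative_Im[OF chainKT[OF holdK x]]] .
  have d3: "((\<lambda>x. blinfun_apply (exO cs T) (cs (deriv (deriv K) (T x)) x)) has_derivative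
      (\<lambda>h. blinfun_apply (exO cs T) (cs (deriv (deriv K) (T 0)) h + cs (deriv (deriv (deriv K)) (T 0) * T h) 0))) (at 0)"
    using bounded_linear.has_derivative[OF blinfun.bounded_linear_right dcsK[OF holddK x]] .
  have d4: "((\<lambda>x. exO cs T o\<^sub>L blinfun_apply (exO cs T) (cs (deriv (deriv K) (T x)) x)) has_derivative
      (\<lambda>h. (exO cs T o\<^sub>L blinfun_apply (exO cs T) (cs (deriv (deriv K) (T 0)) h + cs (deriv (deriv (deriv K)) (T 0) * T h) 0)))) (at 0)"
    using bounded_bilinear.FDERIV[OF bounded_bilinear_blinfun_compose has_derivative_const d3] by simp
  have "(exD2F cs T K has_derivative (\<lambda>h. Re (deriv (deriv K) (T 0) * T h) *\<^sub>R exB1 cs T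
      + Im (deriv (deriv K) (T 0) * T h) *\<^sub>R (exCJ cs o\<^sub>L exB1 cs T)
      + (exO cs T o\<^sub>L blinfun_apply (exO cs T) (cs (deriv (deriv K) (T 0)) h + cs (deriv (deriv (deriv K)) (T 0) * T h) 0)))) (at 0)"
    unfolding e by (intro has_derivative_add d1 d2 d4)
  then show ?thesis by (rule has_derivative_ex_blinfun)
qed

end


context
  fixes cs :: "complex \<Rightarrow> 'a::banach \<Rightarrow> 'a" and T :: "'a \<Rightarrow> complex" and K :: "complex \<Rightarrow> complex"
  assumes c: "complex_scaling cs" and Tbl: "bounded_linear T"
    and Thom: "\<forall>a y. T (cs a y) = a * T y" and Tnb: "\<forall>y. cmod (T y) \<le> norm y"
    and holK: "K holomorphic_on ball 0 1" and K0: "K 0 = 1" and Knz: "\<forall>z\<in>ball 0 1. K z \<noteq> 0"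
begin

interpretation Tl: bounded_linear T by (rule Tbl)

lemmas appDF = app_exDF[OF c Tbl Thom Tnb]

lemma ex_DF0: "exDF cs T K 0 = id_blinfun"
  by (rule blinfun_eqI) (simp add: appDF Tl.zero K0 cs_one[OF c] cs_zero_right[OF c])

lemma T_DF: "T (blinfun_apply (exDF cs T K x) v) = (K (T x) + deriv K (T x) * T x) * T v"
  by (simp add: appDF Tl.add Thom algebra_simps)

lemma DF_self: "blinfun_apply (exDF cs T K x) (cs a x) = cs (a * (K (T x) + T x * deriv K (T x))) x"
  by (simp add: appDF Thom cs_mult[OF c, symmetric] cs_add_left[OF c] algebra_simps)

lemma ex_inv:
  assumes x: "x \<in> ball 0 1" and A: "K (T x) + T x * deriv K (T x) \<noteq> 0"
  shows "\<exists>L. L o\<^sub>L exDF cs T K x = id_blinfun \<and> exDF cs T K x o\<^sub>L L = id_blinfun"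
proof -
  define a where "a = K (T x)"
  define b where "b = deriv K (T x)"
  define s where "s = T x"
  define AA where "AA = a + s * b"
  define c0 where "c0 = b / (a * AA)"
  have anz: "a \<noteq> 0" unfolding a_def using Knz Tin[OF c Tbl Thom Tnb holK x] by blast
  have AAnz: "AA \<noteq> 0" using A unfolding AA_def a_def s_def b_def .
  have c0AA: "c0 * AA = b / a" unfolding c0_def using anz AAnz by (simp add: field_simps)
  have blL: "bounded_linear (\<lambda>y. cs (1/a) y - cs (c0 * T y) x)"
    by (rule bounded_linear_sub[OF blcs_right[OF c Tbl Thom Tnb]
          bounded_linear_compose[OF blcs_left[OF c Tbl Thom Tnb] bounded_linear_compose[OF bounded_linear_mult_right Tbl]]])
  define L where "L = Blinfun (\<lambda>y. cs (1/a) y - cs (c0 * T y) x)"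
  have appL: "blinfun_apply L y = cs (1/a) y - cs (c0 * T y) x" for y
    unfolding L_def bounded_linear_Blinfun_apply[OF blL] ..
  have DFa: "blinfun_apply (exDF cs T K x) v = cs a v + cs (b * T v) x" for v
    unfolding appDF a_def b_def ..
  have TL: "T (cs (1/a) y - cs (c0 * T y) x) = T y / a - c0 * T y * s" for y
    unfolding s_def by (simp add: Tl.diff Thom)
  have TD: "T (cs a v + cs (b * T v) x) = a * T v + b * T v * s" for v
    unfolding s_def by (simp add: Tl.add Thom)
  have "L o\<^sub>L exDF cs T K x = id_blinfun"
  proof (rule blinfun_eqI)
    fix v
    have "c0 * (a * T v + b * T v * s) = (c0 * AA) * T v" unfolding AA_def by (simp add: algebra_simps)
    then have s2: "1/a * (b * T v) = c0 * (a * T v + b * T v * s)" using c0AA by simp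
    have "blinfun_apply (L o\<^sub>L exDF cs T K x) v
        = cs (1/a) (cs a v + cs (b * T v) x) - cs (c0 * (a * T v + b * T v * s)) x"
      unfolding blinfun_apply_blinfun_compose appL TD DFa ..
    also have "\<dots> = cs (1/a * a) v + cs (1/a * (b * T v)) x - cs (c0 * (a * T v + b * T v * s)) x"
      unfolding cs_add_right[OF c] cs_mult[OF c] ..
    also have "\<dots> = v" unfolding s2 using anz by (simp add: cs_one[OF c])
    finally show "blinfun_apply (L o\<^sub>L exDF cs T K x) v = blinfun_apply id_blinfun v" by simp
  qed
  moreover have "exDF cs T K x o\<^sub>L L = id_blinfun"
  proof (rule blinfun_eqI)
    fix y
    have "b * (T y / a - c0 * T y * s) = (b / a - c0 * b * s) * T y" by (simp add: algebra_simps)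
    also have "b / a - c0 * b * s = c0 * AA - c0 * b * s" using c0AA by simp
    also have "\<dots> = a * c0" unfolding AA_def by (simp add: algebra_simps)
    finally have s2: "a * (c0 * T y) = b * (T y / a - c0 * T y * s)" by simp
    have "blinfun_apply (exDF cs T K x o\<^sub>L L) y
        = cs a (cs (1/a) y - cs (c0 * T y) x) + cs (b * (T y / a - c0 * T y * s)) x"
      unfolding blinfun_apply_blinfun_compose DFa TL appL ..
    also have "\<dots> = cs (a * (1/a)) y - cs (a * (c0 * T y)) x + cs (b * (T y / a - c0 * T y * s)) x"
      unfolding cs_diff_right[OF c] cs_mult[OF c] ..
    also have "\<dots> = y" unfolding s2 using anz by (simp add: cs_one[OF c])
    finally show "blinfun_apply (exDF cs T K x o\<^sub>L L) y = blinfun_apply id_blinfun y" by simp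
  qed
  ultimately show ?thesis by blast
qed

lemma ex_h:
  assumes x: "x \<in> ball 0 1" and A: "K (T x) + T x * deriv K (T x) \<noteq> 0"
  shows "inv_apply (exDF cs T K x) (cs (K (T x)) x) = cs (K (T x) / (K (T x) + T x * deriv K (T x))) x"
proof -
  obtain L where L: "L o\<^sub>L exDF cs T K x = id_blinfun" using ex_inv[OF x A] by blast
  have inj: "y = y'" if "blinfun_apply (exDF cs T K x) y = blinfun_apply (exDF cs T K x) y'" for y y'
  proof -
    have "blinfun_apply (L o\<^sub>L exDF cs T K x) y = blinfun_apply (L o\<^sub>L exDF cs T K x) y'" using that by simp
    then show ?thesis using L by simp
  qed
  have "blinfun_apply (exDF cs T K x) (cs (K (T x) / (K (T x) + T x * deriv K (T x))) x) = cs (K (T x)) x"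
    unfolding DF_self using A by simp
  then show ?thesis unfolding inv_apply_def using inj by (intro the_equality) auto
qed

lemma holo_f: "holo_map cs (*) (ball 0 1) (\<lambda>x. K (T x))"
  unfolding holo_map_def
proof (intro conjI ballI)
  fix x :: 'a assume x: "x \<in> ball 0 1"
  show "\<exists>D. ((\<lambda>x. K (T x)) has_derivative D) (at x) \<and> (\<forall>c v. D (cs c v) = c * D v)"
    using chainKT[OF c Tbl Thom Tnb holK holK x] Thom by (intro exI[of _ "\<lambda>h. deriv K (T x) * T h"]) auto
qed simp

lemma holo_F: "holo_map cs cs (ball 0 1) (\<lambda>x. cs (K (T x)) x)"
  unfolding holo_map_def
proof (intro conjI ballI)
  fix x :: 'a assume x: "x \<in> ball 0 1"
  show "\<exists>D. ((\<lambda>x. cs (K (T x)) x) has_derivative D) (at x) \<and> (\<forall>c v. D (cs c v) = cs c (D v))"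
    using dcsK[OF c Tbl Thom Tnb holK holK x]
    by (intro exI[of _ "\<lambda>h. cs (K (T x)) h + cs (deriv K (T x) * T h) x"])
       (auto simp: Thom cs_add_right[OF c] cs_mult[OF c, symmetric] ac_simps)
qed simp

end


lemma ex_admissible:
  fixes cs :: "complex \<Rightarrow> 'a::banach \<Rightarrow> 'a" and T :: "'a \<Rightarrow> complex" and K :: "complex \<Rightarrow> complex"
  assumes c: "complex_scaling cs" and Tbl: "bounded_linear T"
    and Thom: "\<forall>a y. T (cs a y) = a * T y" and Tnb: "\<forall>y. cmod (T y) \<le> norm y"
    and holK: "K holomorphic_on ball 0 1" and K0: "K 0 = 1" and Knz: "\<forall>z\<in>ball 0 1. K z \<noteq> 0"
    and rel: "\<forall>z\<in>ball 0 1. K z + z * deriv K z = K z * g_beta g \<beta> (w z)"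
    and wb: "\<forall>z\<in>ball 0 1. w z \<in> ball 0 1"
    and gbnz: "\<forall>\<zeta>\<in>ball 0 1. g_beta g \<beta> \<zeta> \<noteq> 0"
  shows "\<exists>D3. admissible cs g \<beta> (\<lambda>x. cs (K (T x)) x) (exDF cs T K) (exD2F cs T K) D3"
proof -
  note tin = Tin[OF c Tbl Thom Tnb holK]
  have Anz: "K (T x) + T x * deriv K (T x) \<noteq> 0" if "x \<in> ball 0 1" for x
    using rel tin[OF that] Knz wb gbnz by auto
  obtain D3 where dD2F: "(exD2F cs T K has_derivative blinfun_apply D3) (at 0)"
    using ex_dD2F[OF c Tbl Thom Tnb holK] by blast
  define \<alpha> where "\<alpha> z = K z / (K z + z * deriv K z)" for z
  have hol\<alpha>: "\<alpha> holomorphic_on ball 0 1" unfolding \<alpha>_def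
  proof (intro holomorphic_intros holK holdK[OF c Tbl Thom Tnb holK])
    fix z :: complex assume z: "z \<in> ball 0 1"
    show "K z + z * deriv K z \<noteq> 0" using rel z Knz wb gbnz by auto
  qed simp
  have hx: "inv_apply (exDF cs T K x) (cs (K (T x)) x) = cs (\<alpha> (T x)) x" if "x \<in> ball 0 1" for x
    using ex_h[OF c Tbl Thom Tnb holK K0 Knz that Anz[OF that]] unfolding \<alpha>_def by simp
  have holoh: "holo_map cs cs (ball 0 1) (\<lambda>x. inv_apply (exDF cs T K x) (cs (K (T x)) x))"
    unfolding holo_map_def
  proof (intro conjI ballI)
    fix x :: 'a assume x: "x \<in> ball 0 1"
    have d: "((\<lambda>x. cs (\<alpha> (T x)) x) has_derivative (\<lambda>h. cs (\<alpha> (T x)) h + cs (deriv \<alpha> (T x) * T h) x)) (at x)"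
      using dcsK[OF c Tbl Thom Tnb holK hol\<alpha> x] .
    have d2: "((\<lambda>x. inv_apply (exDF cs T K x) (cs (K (T x)) x)) has_derivative (\<lambda>h. cs (\<alpha> (T x)) h + cs (deriv \<alpha> (T x) * T h) x)) (at x)"
      by (rule has_derivative_transform_within_open[OF d open_ball x]) (simp add: hx)
    show "\<exists>D. ((\<lambda>x. inv_apply (exDF cs T K x) (cs (K (T x)) x)) has_derivative D) (at x) \<and> (\<forall>c v. D (cs c v) = cs c (D v))"
      using d2 by (intro exI[of _ "\<lambda>h. cs (\<alpha> (T x)) h + cs (deriv \<alpha> (T x) * T h) x"])
         (auto simp: Thom cs_add_right[OF c] cs_mult[OF c, symmetric] ac_simps)
  qed simp
  have Mh: "Mhat cs g \<beta> (\<lambda>x. inv_apply (exDF cs T K x) (cs (K (T x)) x))"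
    unfolding Mhat_def
  proof (intro conjI holoh ballI allI impI)
    fix x :: 'a and S assume x: "x \<in> ball 0 1 - {0}" and S: "support_functional cs x S"
    have xb: "x \<in> ball 0 1" using x by simp
    have nx: "norm x \<noteq> 0" using x by simp
    have Sx: "S x = of_real (norm x)" and Shom: "\<forall>c y. S (cs c y) = c * S y"
      using S unfolding support_functional_def by blast+
    have gnz: "g_beta g \<beta> (w (T x)) \<noteq> 0" using gbnz wb tin[OF xb] by blast
    have Knz': "K (T x) \<noteq> 0" using Knz tin[OF xb] by blast
    have a: "\<alpha> (T x) = 1 / g_beta g \<beta> (w (T x))"
      unfolding \<alpha>_def using rel tin[OF xb] Knz' gnz by simp
    have "complex_of_real (norm x) / S (inv_apply (exDF cs T K x) (cs (K (T x)) x)) = g_beta g \<beta> (w (T x))"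
      unfolding hx[OF xb] Shom[rule_format] Sx a using nx gnz by simp
    then show "complex_of_real (norm x) / S (inv_apply (exDF cs T K x) (cs (K (T x)) x)) \<in> g_beta g \<beta> ` ball 0 1"
      using wb tin[OF xb] by auto
  qed
  have "admissible cs g \<beta> (\<lambda>x. cs (K (T x)) x) (exDF cs T K) (exD2F cs T K) D3"
    unfolding admissible_def
  proof (intro conjI)
    show "holo_map cs cs (ball 0 1) (\<lambda>x. cs (K (T x)) x)" by (rule holo_F[OF c Tbl Thom Tnb holK K0 Knz])
    show "\<exists>f. holo_map cs (*) (ball 0 1) f \<and> (\<forall>x\<in>ball 0 1. cs (K (T x)) x = cs (f x) x)"
      using holo_f[OF c Tbl Thom Tnb holK K0 Knz] by blast
    show "cs (K (T 0)) 0 = 0" by (simp add: cs_zero_right[OF c])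
    show "\<forall>x\<in>ball 0 1. ((\<lambda>x. cs (K (T x)) x) has_derivative blinfun_apply (exDF cs T K x)) (at x)"
      using ex_dF[OF c Tbl Thom Tnb holK] by blast
    show "exDF cs T K 0 = id_blinfun" by (rule ex_DF0[OF c Tbl Thom Tnb holK K0 Knz])
    show "\<forall>x\<in>ball 0 1. \<exists>L. L o\<^sub>L exDF cs T K x = id_blinfun \<and> exDF cs T K x o\<^sub>L L = id_blinfun"
      using ex_inv[OF c Tbl Thom Tnb holK K0 Knz] Anz by blast
    show "Mhat cs g \<beta> (\<lambda>x. inv_apply (exDF cs T K x) (cs (K (T x)) x))" by (rule Mh)
    show "\<forall>x\<in>ball 0 1. (exDF cs T K has_derivative blinfun_apply (exD2F cs T K x)) (at x)"
      using ex_dDF[OF c Tbl Thom Tnb holK] by blast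
    show "(exD2F cs T K has_derivative blinfun_apply D3) (at 0)" by (rule dD2F)
  qed
  then show ?thesis by blast
qed


lemma extremal_K:
  fixes w g :: "complex \<Rightarrow> complex"
  assumes holw: "w holomorphic_on ball 0 1" and w0: "w 0 = 0" and wb: "\<forall>z\<in>ball 0 1. w z \<in> ball 0 1"
    and holg: "g holomorphic_on ball 0 1" and g0: "g 0 = 1"
  shows "\<exists>K. K holomorphic_on ball 0 1 \<and> K 0 = 1 \<and> (\<forall>z\<in>ball 0 1. K z \<noteq> 0) \<and>
     (\<forall>z\<in>ball 0 1. K z + z * deriv K z = K z * g_beta g \<beta> (w z))"
proof -
  have o: "open (ball (0::complex) 1)" by simp
  have holgw: "(\<lambda>z. g (w z)) holomorphic_on ball 0 1"
  proof -
    have "w ` ball 0 1 \<subseteq> ball 0 1" using wb by blast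
    then show ?thesis using holomorphic_on_compose_gen[OF holw holg] by (simp add: o_def)
  qed
  define E where "E z = g_beta g \<beta> (w z) - 1" for z
  have holE: "E holomorphic_on ball 0 1" unfolding E_def g_beta_def
    by (intro holomorphic_intros holgw)
  have E0: "E 0 = 0" unfolding E_def using g_beta_at1[of g 0 \<beta>] g0 w0 by simp
  define G where "G = (\<lambda>z. if z = 0 then deriv E 0 else (E z - E 0) / (z - 0))"
  have holG: "G holomorphic_on ball 0 1" unfolding G_def by (rule pole_lemma[OF holE]) simp
  have GE: "z * G z = E z" for z unfolding G_def using E0 by auto
  obtain H where H: "\<And>x. x \<in> ball 0 1 \<Longrightarrow> (H has_field_derivative G x) (at x within ball 0 1)"
    using holomorphic_convex_primitive'[OF convex_ball o holG] by blast
  have H': "(H has_field_derivative G x) (at x)" if "x \<in> ball 0 1" for x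
    using H[OF that] at_within_open[OF that o] by simp
  define K where "K z = exp (H z - H 0)" for z
  have dK: "(K has_field_derivative G z * K z) (at z)" if "z \<in> ball 0 1" for z
    unfolding K_def using H'[OF that] by (auto intro!: derivative_eq_intros)
  have holK: "K holomorphic_on ball 0 1"
    unfolding holomorphic_on_open[OF o] using dK by blast
  have K0: "K 0 = 1" unfolding K_def by simp
  have Knz: "\<forall>z\<in>ball 0 1. K z \<noteq> 0" unfolding K_def by simp
  have rel: "\<forall>z\<in>ball 0 1. K z + z * deriv K z = K z * g_beta g \<beta> (w z)"
  proof
    fix z :: complex assume z: "z \<in> ball 0 1"
    have "deriv K z = G z * K z" using DERIV_imp_deriv[OF dK[OF z]] .
    then have "K z + z * deriv K z = K z * (1 + z * G z)" by (simp add: algebra_simps)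
    also have "\<dots> = K z * g_beta g \<beta> (w z)" unfolding GE E_def by simp
    finally show "K z + z * deriv K z = K z * g_beta g \<beta> (w z)" .
  qed
  show ?thesis using holK K0 Knz rel by blast
qed

lemma part2w:
  fixes cs :: "complex \<Rightarrow> 'a::banach \<Rightarrow> 'a" and g w :: "complex \<Rightarrow> complex"
  assumes c: "complex_scaling cs" and b: "\<bar>\<beta>\<bar> < pi / 2"
    and holg: "g holomorphic_on ball 0 1" and g0: "g 0 = 1" and reg: "\<forall>z\<in>ball 0 1. Re (g z) > 0"
    and G1: "deriv g 0 \<noteq> 0"
    and holw: "w holomorphic_on ball 0 1" and w0: "w 0 = 0" and wb: "\<forall>z\<in>ball 0 1. w z \<in> ball 0 1"
    and W: "(deriv w 0 = 1 \<and> deriv (deriv w) 0 = 0 \<and> 1 \<le> cmod ((1 - 2 * lam) * of_real (cos \<beta>) * deriv g 0 + exp (\<i> * of_real \<beta>) / 2 * (deriv (deriv g) 0 / deriv g 0)))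
          \<or> (deriv w 0 = 0 \<and> deriv (deriv w) 0 = 2 \<and> cmod ((1 - 2 * lam) * of_real (cos \<beta>) * deriv g 0 + exp (\<i> * of_real \<beta>) / 2 * (deriv (deriv g) 0 / deriv g 0)) \<le> 1)"
    and nu: "norm (u::'a) = 1"
    and cc: "cc < psi \<beta> g lam * cmod (deriv g 0) / 2"
  shows "\<exists>F DF D2F D3 x. admissible cs g \<beta> F DF D2F D3 \<and> x \<in> ball (0::'a) 1 - {0} \<and>
                  norm (lhs_expr cs D2F D3 lam x) > cc * norm x ^ 3"
proof -
  obtain T where Tbl: "bounded_linear T" and Thom: "\<forall>a y. T (cs a y) = a * T y"
    and Tnb: "\<forall>y. cmod (T y) \<le> norm y" and Tu: "T u = 1"
    using complex_support_exists[OF c nu] by blast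
  obtain K where holK: "K holomorphic_on ball 0 1" and K0: "K 0 = 1" and Knz: "\<forall>z\<in>ball 0 1. K z \<noteq> 0"
    and rel: "\<forall>z\<in>ball 0 1. K z + z * deriv K z = K z * g_beta g \<beta> (w z)"
    using extremal_K[OF holw w0 wb holg g0] by blast
  have gbnz: "\<forall>\<zeta>\<in>ball 0 1. g_beta g \<beta> \<zeta> \<noteq> 0" using g_beta_nonzero[OF b] reg by blast
  obtain D3 where adm: "admissible cs g \<beta> (\<lambda>x. cs (K (T x)) x) (exDF cs T K) (exD2F cs T K) D3"
    using ex_admissible[OF c Tbl Thom Tnb holK K0 Knz rel wb gbnz] by blast
  have holoF: "holo_map cs cs (ball 0 1) (\<lambda>x. cs (K (T x)) x)"
    and dF: "\<forall>x\<in>ball 0 1. ((\<lambda>x. cs (K (T x)) x) has_derivative blinfun_apply (exDF cs T K x)) (at x)"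
    and dDF: "\<forall>x\<in>ball 0 1. (exDF cs T K has_derivative blinfun_apply (exD2F cs T K x)) (at x)"
    and dD2F: "(exD2F cs T K has_derivative blinfun_apply D3) (at 0)"
    using adm unfolding admissible_def by blast+
  have Fe: "\<forall>x\<in>ball 0 1. cs (K (T x)) x = cs ((\<lambda>x. K (T x)) x) x" by simp
  have ke: "\<forall>z\<in>ball 0 1. (\<lambda>x. K (T x)) (cs z u) = K z" using Thom Tu by simp
  have r: "(0::real) < 1/2" "(1/2::real) < 1" by auto
  have nl: "norm (lhs_expr cs (exD2F cs T K) D3 lam ((1/2) *\<^sub>R u)) = (1/2)^3 * cmod (deriv (deriv K) 0 / 2 - lam * (deriv K 0)^2)"
    by (rule banach_core[OF c Fe holoF dF dDF dD2F nu holK ke r])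
  note cr = coeff_relation[OF holK holw w0 _ holg g0 K0, of \<beta>]
  have cr1: "deriv K 0 = exp (- \<i> * of_real \<beta>) * of_real (cos \<beta>) * deriv g 0 * deriv w 0"
    using cr(1) wb rel by blast
  have cr2: "deriv (deriv K) 0 = (deriv K 0)^2 + exp (- \<i> * of_real \<beta>) * of_real (cos \<beta>) * (deriv (deriv g) 0 * (deriv w 0)^2 + deriv g 0 * deriv (deriv w) 0) / 2"
    using cr(2) wb rel by blast
  have val: "deriv (deriv K) 0 / 2 - lam * (deriv K 0)^2
     = (exp (- \<i> * of_real \<beta>) * of_real (cos \<beta>) * deriv g 0 / 2) * (deriv (deriv w) 0 / 2 + (deriv w 0)^2 * (deriv (deriv g) 0 / (2 * deriv g 0)
        + (1 - 2 * lam) * (exp (- \<i> * of_real \<beta>) * of_real (cos \<beta>)) * deriv g 0))"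
    by (rule fs_value[OF G1 cr1 cr2])
  have eq: "cmod (deriv (deriv K) 0 / 2 - lam * (deriv K 0)^2) = 1/2 * psi \<beta> g lam * cmod (deriv g 0)"
    unfolding val psi_def using fs_equal[OF b G1 W] by simp
  define x where "x = (1/2::real) *\<^sub>R u"
  have xb: "x \<in> ball (0::'a) 1 - {0}" unfolding x_def using nu by auto
  have nx: "norm x = 1/2" unfolding x_def using nu by simp
  have "cc * norm x ^ 3 < norm (lhs_expr cs (exD2F cs T K) D3 lam x)"
    unfolding x_def nl eq using nx cc unfolding x_def by simp
  then show ?thesis using adm xb by blast
qed


lemma w_id_props:
  "(\<lambda>z::complex. z) holomorphic_on ball 0 1" "deriv (\<lambda>z::complex. z) 0 = 1" "deriv (deriv (\<lambda>z::complex. z)) 0 = 0"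
proof -
  show "(\<lambda>z::complex. z) holomorphic_on ball 0 1" by (intro holomorphic_intros)
  have d: "deriv (\<lambda>z::complex. z) = (\<lambda>z. 1)"
    by (rule ext, rule DERIV_imp_deriv) (auto intro!: derivative_eq_intros)
  then show "deriv (\<lambda>z::complex. z) 0 = 1" by simp
  show "deriv (deriv (\<lambda>z::complex. z)) 0 = 0" unfolding d
    by (rule DERIV_imp_deriv) (auto intro!: derivative_eq_intros)
qed

lemma w_sq_props:
  "(\<lambda>z::complex. z^2) holomorphic_on ball 0 1" "deriv (\<lambda>z::complex. z^2) 0 = 0" "deriv (deriv (\<lambda>z::complex. z^2)) 0 = 2"
proof -
  show "(\<lambda>z::complex. z^2) holomorphic_on ball 0 1" by (intro holomorphic_intros)
  have d: "deriv (\<lambda>z::complex. z^2) = (\<lambda>z. 2 * z)"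
    by (rule ext, rule DERIV_imp_deriv) (auto intro!: derivative_eq_intros)
  then show "deriv (\<lambda>z::complex. z^2) 0 = 0" by simp
  show "deriv (deriv (\<lambda>z::complex. z^2)) 0 = 2" unfolding d
    by (rule DERIV_imp_deriv) (auto intro!: derivative_eq_intros)
qed

theorem theorem2:
  fixes cs :: "complex \<Rightarrow> 'a::banach \<Rightarrow> 'a" and \<beta> :: real and g :: "complex \<Rightarrow> complex"
  assumes "complex_scaling cs"
    and "\<bar>\<beta>\<bar> < pi / 2"
    and "g holomorphic_on ball 0 1" and "inj_on g (ball 0 1)"
    and "g 0 = 1" and "\<forall>z\<in>ball 0 1. Re (g z) > 0"
  shows "(\<forall>F DF D2F D3. admissible cs g \<beta> F DF D2F D3 \<longrightarrow>
            (\<forall>lam. \<forall>x\<in>ball (0::'a) 1 - {0}.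
               norm (lhs_expr cs D2F D3 lam x) \<le> norm x ^ 3 / 2 * psi \<beta> g lam * cmod (deriv g 0)))
       \<and> ((\<exists>x::'a. x \<noteq> 0) \<longrightarrow>
            (\<forall>lam c. c < psi \<beta> g lam * cmod (deriv g 0) / 2 \<longrightarrow>
               (\<exists>F DF D2F D3 x. admissible cs g \<beta> F DF D2F D3 \<and> x \<in> ball (0::'a) 1 - {0} \<and>
                  norm (lhs_expr cs D2F D3 lam x) > c * norm x ^ 3)))"
proof (intro conjI allI impI ballI)
  fix F DF D2F D3 lam x
  assume "admissible cs g \<beta> F DF D2F D3" "x \<in> ball (0::'a) 1 - {0}"
  then show "norm (lhs_expr cs D2F D3 lam x) \<le> norm x ^ 3 / 2 * psi \<beta> g lam * cmod (deriv g 0)"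
    using part1[OF assms] by blast
next
  fix lam cc
  assume ex: "\<exists>x::'a. x \<noteq> 0" and cc: "cc < psi \<beta> g lam * cmod (deriv g 0) / 2"
  obtain x0 :: 'a where x0: "x0 \<noteq> 0" using ex by blast
  define u where "u = (1 / norm x0) *\<^sub>R x0"
  have nu: "norm u = 1" unfolding u_def using x0 by simp
  obtain ginv where "\<And>z. z \<in> ball 0 1 \<Longrightarrow> deriv g z * deriv ginv (g z) = 1"
    using holomorphic_has_inverse[OF assms(3) open_ball assms(4)] by blast
  then have G1: "deriv g 0 \<noteq> 0" by (metis centre_in_ball mult_zero_left zero_neq_one zero_less_one)
  show "\<exists>F DF D2F D3 x. admissible cs g \<beta> F DF D2F D3 \<and> x \<in> ball (0::'a) 1 - {0} \<and>
                  norm (lhs_expr cs D2F D3 lam x) > cc * norm x ^ 3"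
  proof (cases "1 \<le> cmod ((1 - 2 * lam) * of_real (cos \<beta>) * deriv g 0 + exp (\<i> * of_real \<beta>) / 2 * (deriv (deriv g) 0 / deriv g 0))")
    case True
    show ?thesis
      by (rule part2w[OF assms(1,2,3,5,6) G1 w_id_props(1) _ _ _ nu cc])
         (use True w_id_props in auto)
  next
    case False
    show ?thesis
      by (rule part2w[OF assms(1,2,3,5,6) G1 w_sq_props(1) _ _ _ nu cc])
         (use False w_sq_props in \<open>auto simp: norm_power power_less_one_iff abs_square_less_1\<close>)
  qed
qed

end
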